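(* Let $p$ be a directed lattice path on the square grid with at least one step, with first step $\mathbf a$ and last step $\mathbf b$, and set $x^{\circlearrowright}(p)=(x_{ur},x_{rd},x_{dl},x_{lu})$ and $x^{\circlearrowleft}(p)=(x_{ru},x_{dr},x_{ld},x_{ul})$, where $x_{st}$ is the number of turns of type $st$ in $p$. (1) There is an integer $k$ such that $v(p):=x^{\circlearrowright}(p)-x^{\circlearrowleft}(p)-k(1,1,1,1)\in\{0,1\}^4$. (2) Writing $v(p)=(v_{ur},v_{rd},v_{dl},v_{lu})$, let $\mathbf a=s_0,s_1,\dots,s_m=\mathbf b$ be the shortest sequence ($0\le m\le 3$) in which each $s_{j+1}$ is the clockwise successor of $s_j$ in the cyclic order $u\to r\to d\to l\to u$. Then $v_t=1$ if and only if $t=s_js_{j+1}$ for some $0\le j<m$. (3) If $p$ is closed and self-avoiding, with turns counted cyclically, then $(x^{\circlearrowright}(p)-x^{\circlearrowleft}(p))\cdot(1,1,1,1)^t$ equals $4$ if $p$ is oriented clockwise and $-4$ if it is oriented counterclockwise.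
   Context: A directed lattice path is a finite sequence of steps, each in $\{u=(0,1),\ r=(1,0),\ d=(0,-1),\ l=(-1,0)\}$, such that no two consecutive steps are opposite. A turn of type $st$ (with $s\ne t$) is an occurrence of a step $s$ immediately followed by a step $t$. A path is closed if it ends at its starting point; for closed paths the last step is considered to be followed by the first step (turns counted cyclically), and it is self-avoiding if it visits no lattice point twice except that start equals end. Its orientation is clockwise or counterclockwise as a simple closed polygon. *)

theory Defs
  imports Main
begin

datatype step = U | R | D | L

fun step_vec :: "step \<Rightarrow> int \<times> int" where
  "step_vec U = (0, 1)"
| "step_vec R = (1, 0)"
| "step_vec D = (0, -1)"
| "step_vec L = (-1, 0)"

fun opposite :: "step \<Rightarrow> step" where
  "opposite U = D"
| "opposite D = U"
| "opposite R = L"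
| "opposite L = R"

fun cw :: "step \<Rightarrow> step" where
  "cw U = R"
| "cw R = D"
| "cw D = L"
| "cw L = U"

definition directed :: "step list \<Rightarrow> bool" where
  "directed p \<longleftrightarrow> (\<forall>i. Suc i < length p \<longrightarrow> p ! Suc i \<noteq> opposite (p ! i))"

definition turns :: "step list \<Rightarrow> step \<Rightarrow> step \<Rightarrow> nat" where
  "turns p s t = card {i. Suc i < length p \<and> p ! i = s \<and> p ! Suc i = t}"

definition cyc_turns :: "step list \<Rightarrow> step \<Rightarrow> step \<Rightarrow> nat" where
  "cyc_turns p s t = card {i. i < length p \<and> p ! i = s \<and> p ! (Suc i mod length p) = t}"

definition pos :: "step list \<Rightarrow> nat \<Rightarrow> int \<times> int" where
  "pos p i = ((\<Sum>j<i. fst (step_vec (p ! j))), (\<Sum>j<i. snd (step_vec (p ! j))))"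

definition closed :: "step list \<Rightarrow> bool" where
  "closed p \<longleftrightarrow> pos p (length p) = (0, 0)"

text \<open>Visits no lattice point twice, except that start equals end.\<close>
definition self_avoiding :: "step list \<Rightarrow> bool" where
  "self_avoiding p \<longleftrightarrow> inj_on (pos p) {0..<length p}"

text \<open>Twice the signed (shoelace) area of the closed polygon traced by p.\<close>
definition signed_area2 :: "step list \<Rightarrow> int" where
  "signed_area2 p = (\<Sum>i<length p. fst (pos p i) * snd (pos p (Suc i))
                                     - fst (pos p (Suc i)) * snd (pos p i))"

definition clockwise :: "step list \<Rightarrow> bool" where
  "clockwise p \<longleftrightarrow> signed_area2 p < 0"

definition counterclockwise :: "step list \<Rightarrow> bool" where
  "counterclockwise p \<longleftrightarrow> signed_area2 p > 0"

definition cw_dist :: "step \<Rightarrow> step \<Rightarrow> nat" where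
  "cw_dist a b = (LEAST m. (cw ^^ m) a = b)"

end

theory Submission
  imports Defs
begin


fun idx :: "step \<Rightarrow> nat" where
  "idx U = 0" | "idx R = 1" | "idx D = 2" | "idx L = 3"

lemma cw_pow_idx: "idx ((cw ^^ m) a) = (idx a + m) mod 4"
proof (induction m)
  case 0 then show ?case by (cases a) auto
next
  case (Suc m)
  then show ?case by (cases "(cw ^^ m) a") (auto simp: mod_Suc)
qed

lemma idx_inj: "idx a = idx b \<Longrightarrow> a = b"
  by (cases a; cases b; simp)

lemma idx_lt: "idx a < 4" by (cases a) auto

lemma cw_dist_eq: "cw_dist a b = (4 + idx b - idx a) mod 4"
proof -
  have P: "(cw ^^ m) a = b \<longleftrightarrow> (idx a + m) mod 4 = idx b" for m
    using cw_pow_idx[of m a] idx_inj by metis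
  show ?thesis unfolding cw_dist_def P
  proof (rule Least_equality)
    show "(idx a + (4 + idx b - idx a) mod 4) mod 4 = idx b"
      using idx_lt[of a] idx_lt[of b] by (cases a; cases b; simp)
  next
    fix y assume "(idx a + y) mod 4 = idx b"
    then show "(4 + idx b - idx a) mod 4 \<le> y" 
      by (cases a; cases b; simp; presburger)
  qed
qed

lemma arc_eq: "(\<exists>j < cw_dist a b. s = (cw ^^ j) a) \<longleftrightarrow> (4 + idx s - idx a) mod 4 < (4 + idx b - idx a) mod 4"
proof
  assume "\<exists>j<cw_dist a b. s = (cw ^^ j) a"
  then obtain j where j: "j < cw_dist a b" "s = (cw ^^ j) a" by blast
  have j4: "j < 4" using j(1) unfolding cw_dist_eq by simp
  have "idx s = (idx a + j) mod 4" using j(2) cw_pow_idx by simp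
  moreover have "j = 0 \<or> j = 1 \<or> j = 2 \<or> j = 3" using j4 by linarith
  ultimately have "(4 + idx s - idx a) mod 4 = j" by (cases a; cases s; elim disjE; simp)
  then show "(4 + idx s - idx a) mod 4 < (4 + idx b - idx a) mod 4" using j(1) cw_dist_eq by simp
next
  assume h: "(4 + idx s - idx a) mod 4 < (4 + idx b - idx a) mod 4"
  have "idx ((cw ^^ ((4 + idx s - idx a) mod 4)) a) = idx s"
    unfolding cw_pow_idx by (cases a; cases s; simp)
  then have "s = (cw ^^ ((4 + idx s - idx a) mod 4)) a" using idx_inj by metis
  then show "\<exists>j<cw_dist a b. s = (cw ^^ j) a" using h cw_dist_eq by auto
qed

lemma turns_snoc:
  assumes "q \<noteq> []"
  shows "turns (q @ [t]) s s' = turns q s s' + (if last q = s \<and> t = s' then 1 else 0)"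
proof -
  let ?n = "length q"
  have ln: "last q = q ! (?n - 1)" using assms by (simp add: last_conv_nth)
  have "{i. Suc i < length (q @ [t]) \<and> (q @ [t]) ! i = s \<and> (q @ [t]) ! Suc i = s'}
      = {i. Suc i < ?n \<and> q ! i = s \<and> q ! Suc i = s'} \<union> {i. i = ?n - 1 \<and> last q = s \<and> t = s'}"
  proof (rule set_eqI)
    fix i
    show "i \<in> {i. Suc i < length (q @ [t]) \<and> (q @ [t]) ! i = s \<and> (q @ [t]) ! Suc i = s'} \<longleftrightarrow>
          i \<in> {i. Suc i < ?n \<and> q ! i = s \<and> q ! Suc i = s'} \<union> {i. i = ?n - 1 \<and> last q = s \<and> t = s'}"
    proof (cases "Suc i < ?n")
      case True then show ?thesis using assms by (auto simp: nth_append)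
    next
      case False
      then show ?thesis using assms ln
        by (cases "i = ?n - 1") (auto simp: nth_append)
    qed
  qed
  moreover have "finite {i. Suc i < ?n \<and> q ! i = s \<and> q ! Suc i = s'}" by (rule finite_subset[of _ "{..<?n}"]) auto
  moreover have "?n - 1 \<notin> {i. Suc i < ?n \<and> q ! i = s \<and> q ! Suc i = s'}" using assms by auto
  moreover have "{i. i = ?n - 1 \<and> last q = s \<and> t = s'} = (if last q = s \<and> t = s' then {?n - 1} else {})" by auto
  ultimately show ?thesis unfolding turns_def by (auto simp: card_insert_if)
qed

lemma turns_single: "turns [a] s s' = 0"
  unfolding turns_def by simp

definition fval :: "step list \<Rightarrow> step \<Rightarrow> int" where
  "fval p s = int (turns p s (cw s)) - int (turns p (cw s) s)"

lemma part12_aux: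
  assumes "directed p" "p \<noteq> []"
  shows "\<exists>k. \<forall>s. fval p s = k + (if (4 + idx s - idx (hd p)) mod 4 < (4 + idx (last p) - idx (hd p)) mod 4 then 1 else 0)"
  using assms
proof (induction p rule: rev_induct)
  case Nil then show ?case by simp
next
  case (snoc t q)
  show ?case
  proof (cases "q = []")
    case True
    then show ?thesis
      by (intro exI[of _ 0]) (auto simp: fval_def turns_single)
  next
    case False
    have dq: "directed q" unfolding directed_def
    proof (intro allI impI)
      fix i assume "Suc i < length q"
      then show "q ! Suc i \<noteq> opposite (q ! i)"
        using snoc.prems(1) unfolding directed_def
        by (auto simp: nth_append dest: spec[of _ i])
    qed
    obtain k where k: "\<forall>s. fval q s = k + (if (4 + idx s - idx (hd q)) mod 4 < (4 + idx (last q) - idx (hd q)) mod 4 then 1 else 0)"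
      using snoc.IH[OF dq False] by blast
    have nt: "t \<noteq> opposite (last q)"
    proof -
      have "Suc (length q - 1) < length (q @ [t])" using False by simp
      then have "(q @ [t]) ! Suc (length q - 1) \<noteq> opposite ((q @ [t]) ! (length q - 1))"
        using snoc.prems(1) unfolding directed_def by blast
      moreover have "(q @ [t]) ! Suc (length q - 1) = t" using False by (simp add: nth_append)
      moreover have "(q @ [t]) ! (length q - 1) = last q" using False by (simp add: nth_append last_conv_nth)
      ultimately show ?thesis by simp
    qed
    have fv: "fval (q @ [t]) s = fval q s + (if t = cw (last q) \<and> s = last q then 1 else 0)
          - (if last q = cw t \<and> s = t then 1 else 0)" for s
      unfolding fval_def turns_snoc[OF False] by (cases s; cases t; cases "last q"; simp)
    have hd: "hd (q @ [t]) = hd q" using False by simp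
    let ?a = "hd q" and ?b = "last q"
    define k' where "k' = k + (if t = cw ?b \<and> (4 + idx ?b - idx ?a) mod 4 = 3 then 1
        else if ?b = cw t \<and> (4 + idx ?b - idx ?a) mod 4 = 0 then -1 else 0)"
    show ?thesis
    proof (intro exI[of _ k'] allI)
      fix s
      show "fval (q @ [t]) s = k' + (if (4 + idx s - idx (hd (q @ [t]))) mod 4 < (4 + idx (last (q @ [t])) - idx (hd (q @ [t]))) mod 4 then 1 else 0)"
        unfolding hd fv k'_def using k[rule_format, of s] nt
        by (cases s; cases t; cases ?a; cases ?b; simp)
    qed
  qed
qed


fun mv :: "int \<times> int \<Rightarrow> step \<Rightarrow> int \<times> int" where
  "mv (x,y) U = (x, y+1)" | "mv (x,y) R = (x+1, y)" | "mv (x,y) D = (x, y-1)" | "mv (x,y) L = (x-1, y)"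

fun edges :: "int \<times> int \<Rightarrow> step list \<Rightarrow> ((int \<times> int) \<times> step) list" where
  "edges z [] = []" | "edges z (s#ss) = (z,s) # edges (mv z s) ss"

fun endp :: "int \<times> int \<Rightarrow> step list \<Rightarrow> int \<times> int" where
  "endp z [] = z" | "endp z (s#ss) = endp (mv z s) ss"

definition pts :: "int \<times> int \<Rightarrow> step list \<Rightarrow> (int \<times> int) list" where
  "pts z p = map fst (edges z p)"

lemma pts_Nil[simp]: "pts z [] = []" by (simp add: pts_def)
lemma pts_Cons[simp]: "pts z (s#ss) = z # pts (mv z s) ss" by (simp add: pts_def)

lemma edges_append: "edges z (X @ Y) = edges z X @ edges (endp z X) Y"
  by (induction X arbitrary: z) auto

lemma endp_append[simp]: "endp z (X @ Y) = endp (endp z X) Y"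
  by (induction X arbitrary: z) auto

lemma pts_append: "pts z (X @ Y) = pts z X @ pts (endp z X) Y"
  by (simp add: pts_def edges_append)

lemma pts_snoc: "pts z (X @ [s]) = pts z X @ [endp z X]"
  by (simp add: pts_append)

lemma length_edges[simp]: "length (edges z p) = length p"
  by (induction p arbitrary: z) auto

lemma length_pts[simp]: "length (pts z p) = length p"
  by (simp add: pts_def)

lemma mv_opp[simp]: "mv (mv v s) (opposite s) = v"
  by (cases v; cases s) auto

lemma mv_opp2[simp]: "mv (mv v (opposite s)) s = v"
  by (cases v; cases s) auto

lemma mv_inj: "mv v s = mv v' s \<Longrightarrow> v = v'"
  by (cases v; cases v'; cases s) auto

lemma mv_neq[simp]: "mv v s \<noteq> v"
  by (cases v; cases s) auto

lemma endp_snoc: "endp z (X @ [s]) = mv (endp z X) s" by simp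

definition ends :: "int \<times> int \<Rightarrow> step list \<Rightarrow> (int \<times> int) list" where
  "ends z p = map (\<lambda>(v,s). mv v s) (edges z p)"

lemma pts_endp_hd: "pts w ss @ [endp w ss] = w # tl (pts w ss @ [endp w ss])"
  by (cases ss) auto

lemma ends_eq: "ends z p = tl (pts z p @ [endp z p])"
proof (induction p arbitrary: z)
  case Nil then show ?case by (simp add: ends_def)
next
  case (Cons s ss)
  have "ends z (s # ss) = mv z s # ends (mv z s) ss" by (simp add: ends_def)
  also have "\<dots> = pts (mv z s) ss @ [endp (mv z s) ss]" using Cons pts_endp_hd by metis
  finally show ?case by simp
qed

lemma closed_ends:
  assumes "endp z p = z" "p \<noteq> []"
  shows "ends z p = tl (pts z p) @ [z]"
proof -
  obtain s ss where "p = s # ss" using assms(2) by (cases p) auto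
  then show ?thesis using assms(1) by (simp add: ends_eq)
qed

lemma pts_hd: "p \<noteq> [] \<Longrightarrow> pts z p = z # tl (pts z p)"
  by (cases p) auto

lemma closed_ends_set:
  assumes "endp z p = z" "p \<noteq> []"
  shows "set (ends z p) = set (pts z p)"
proof -
  have "set (pts z p) = insert z (set (tl (pts z p)))" using pts_hd[OF assms(2)] by (metis list.simps(15))
  then show ?thesis using closed_ends[OF assms] by auto
qed

lemma closed_ends_distinct:
  assumes "endp z p = z" "p \<noteq> []" "distinct (pts z p)"
  shows "distinct (ends z p)"
proof -
  have "distinct (z # tl (pts z p))" using assms(3) pts_hd[OF assms(2)] by metis
  then show ?thesis using closed_ends[OF assms(1,2)] by auto
qed

lemma edge_end_in:
  assumes "endp z p = z" "p \<noteq> []" "(v,s) \<in> set (edges z p)"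
  shows "mv v s \<in> set (pts z p)"
proof -
  have "mv v s \<in> set (ends z p)" using assms(3) unfolding ends_def by force
  then show ?thesis using closed_ends_set[OF assms(1,2)] by simp
qed

lemma edge_start_in: "(v,s) \<in> set (edges z p) \<Longrightarrow> v \<in> set (pts z p)"
  unfolding pts_def by force

lemma edge_start_unique:
  assumes "distinct (pts z p)" "(v,s) \<in> set (edges z p)" "(v,s') \<in> set (edges z p)"
  shows "s = s'"
proof -
  have "inj_on fst (set (edges z p))" using assms(1) unfolding pts_def by (simp add: distinct_map)
  then show ?thesis using assms(2,3) by (metis fst_conv inj_onD prod.inject)
qed

lemma edge_end_unique:
  assumes "endp z p = z" "p \<noteq> []" "distinct (pts z p)"
    "(v,s) \<in> set (edges z p)" "(v',s') \<in> set (edges z p)" "mv v s = mv v' s'"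
  shows "v = v' \<and> s = s'"
proof -
  have "distinct (ends z p)" using closed_ends_distinct[OF assms(1-3)] .
  then have "inj_on (\<lambda>(v,s). mv v s) (set (edges z p))" unfolding ends_def by (simp add: distinct_map)
  moreover have "(\<lambda>(v,s). mv v s) (v,s) = (\<lambda>(v,s). mv v s) (v',s')" using assms(6) by simp
  ultimately have "(v,s) = (v',s')" using assms(4,5) by (rule inj_onD)
  then show ?thesis by simp
qed

lemma distinct_edges: "distinct (pts z p) \<Longrightarrow> distinct (edges z p)"
  unfolding pts_def using distinct_map by blast

fun hw :: "int \<times> int \<Rightarrow> (int \<times> int) \<times> step \<Rightarrow> int" where
  "hw (a,b) ((x,y),s) = (if s = R \<and> x = a \<and> b < y then -1 else if s = L \<and> x = a+1 \<and> b < y then 1 else 0)"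

definition W :: "int \<times> int \<Rightarrow> step list \<Rightarrow> int \<times> int \<Rightarrow> int" where
  "W z p c = sum_list (map (hw c) (edges z p))"

fun cr :: "(int \<times> int) \<times> step \<Rightarrow> int" where
  "cr (v,s) = fst v * snd (mv v s) - fst (mv v s) * snd v"

definition AR :: "int \<times> int \<Rightarrow> step list \<Rightarrow> int" where
  "AR z p = sum_list (map cr (edges z p))"

definition tn :: "step \<Rightarrow> step \<Rightarrow> int" where
  "tn a b = (if b = cw a then 1 else if a = cw b then -1 else 0)"

fun ops :: "('a \<Rightarrow> 'a \<Rightarrow> int) \<Rightarrow> 'a list \<Rightarrow> int" where
  "ops f (a#b#xs) = f a b + ops f (b#xs)" | "ops f _ = 0"

definition ct :: "step list \<Rightarrow> int" where
  "ct p = (if p = [] then 0 else ops tn p + tn (last p) (hd p))"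

definition good :: "int \<times> int \<Rightarrow> step list \<Rightarrow> bool" where
  "good z p \<longleftrightarrow> (\<exists>\<sigma>::int. (\<sigma> = 1 \<or> \<sigma> = -1) \<and> ct p = 4 * \<sigma> \<and> (\<forall>c. W z p c = 0 \<or> W z p c = - \<sigma>) \<and> \<sigma> * AR z p < 0)"

definition valid :: "int \<times> int \<Rightarrow> step list \<Rightarrow> bool" where
  "valid z p \<longleftrightarrow> endp z p = z \<and> distinct (pts z p) \<and> 3 \<le> length p"

lemma ops_Cons_Cons: "xs \<noteq> [] \<Longrightarrow> ops f (a # xs) = f a (hd xs) + ops f xs"
  by (cases xs) auto

lemma ops_append:
  "X \<noteq> [] \<Longrightarrow> Y \<noteq> [] \<Longrightarrow> ops f (X @ Y) = ops f X + f (last X) (hd Y) + ops f Y"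
proof (induction X)
  case Nil then show ?case by simp
next
  case (Cons a X)
  show ?case
  proof (cases "X = []")
    case True then show ?thesis using Cons.prems by (simp add: ops_Cons_Cons)
  next
    case False
    then show ?thesis using Cons by (simp add: ops_Cons_Cons)
  qed
qed

lemma ops_Cons2: "ops f (a # b # xs) = f a b + ops f (b # xs)" by simp

lemma ct_rot: "ct (X @ Y) = ct (Y @ X)"
proof (cases "X = [] \<or> Y = []")
  case True then show ?thesis by auto
next
  case False
  then have "X \<noteq> []" "Y \<noteq> []" by auto
  then show ?thesis unfolding ct_def using ops_append[of X Y tn] ops_append[of Y X tn] by auto
qed

lemma sum_rot:
  fixes g :: "_ \<Rightarrow> int"
  assumes "endp z (X @ Y) = z"
  shows "sum_list (map g (edges (endp z X) (Y @ X))) = sum_list (map g (edges z (X @ Y)))"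
  using assms by (simp add: edges_append)

lemma pts_rot:
  assumes "endp z (X @ Y) = z"
  shows "pts (endp z X) (Y @ X) = pts (endp z X) Y @ pts z X"
    and "pts z (X @ Y) = pts z X @ pts (endp z X) Y"
  using assms by (simp_all add: pts_append)

lemma valid_rot:
  assumes "valid z (X @ Y)"
  shows "valid (endp z X) (Y @ X)"
  using assms unfolding valid_def by (auto simp: pts_append)

lemma good_rot:
  assumes "endp z (X @ Y) = z"
  shows "good (endp z X) (Y @ X) \<longleftrightarrow> good z (X @ Y)"
  unfolding good_def W_def AR_def using sum_rot[OF assms] ct_rot by metis

lemma set_pts_rot:
  assumes "endp z (X @ Y) = z"
  shows "set (pts (endp z X) (Y @ X)) = set (pts z (X @ Y))"
  using assms by (auto simp: pts_append)

section \<open>Reversal\<close>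

definition revc :: "step list \<Rightarrow> step list" where
  "revc p = map opposite (rev p)"

lemma edges_revc:
  "edges (endp z p) (revc p) = rev (map (\<lambda>(v,s). (mv v s, opposite s)) (edges z p))"
proof (induction p rule: rev_induct)
  case Nil then show ?case by (simp add: revc_def)
next
  case (snoc s q)
  then show ?case by (simp add: revc_def edges_append)
qed

lemma opposite_opposite[simp]: "opposite (opposite s) = s" by (cases s) auto

lemma hw_rev: "hw c (mv v s, opposite s) = - hw c (v, s)"
  by (cases c; cases v; cases s) auto

lemma cr_rev: "cr (mv v s, opposite s) = - cr (v, s)"
  by (cases v; cases s) (auto simp: algebra_simps)

lemma sum_list_neg: "sum_list (map (\<lambda>x. - f x) xs) = - sum_list (map f xs)" for f :: "_ \<Rightarrow> int"
  by (induction xs) auto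

lemma W_revc: "endp z p = z \<Longrightarrow> W z (revc p) c = - W z p c"
  using edges_revc[of z p] unfolding W_def
  by (simp add: rev_map[symmetric] comp_def case_prod_unfold hw_rev sum_list_neg)

lemma AR_revc: "endp z p = z \<Longrightarrow> AR z (revc p) = - AR z p"
  using edges_revc[of z p] unfolding AR_def
  by (simp add: rev_map[symmetric] comp_def case_prod_unfold cr_rev sum_list_neg del: cr.simps)

lemma ops_map: "ops f (map h xs) = ops (\<lambda>a b. f (h a) (h b)) xs"
  by (induction xs rule: induct_list012) auto

lemma ops_rev: "ops f (rev xs) = ops (\<lambda>a b. f b a) xs"
proof (induction xs)
  case Nil then show ?case by simp
next
  case (Cons a xs)
  show ?case
  proof (cases "xs = []")
    case True then show ?thesis by simp
  next
    case False
    have "ops f (rev (a # xs)) = ops f (rev xs @ [a])" by simp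
    also have "\<dots> = ops f (rev xs) + f (last (rev xs)) a"
      using ops_append[of "rev xs" "[a]" f] False by simp
    also have "\<dots> = ops (\<lambda>a b. f b a) xs + f (hd xs) a" using Cons.IH False by (simp add: last_rev)
    also have "\<dots> = ops (\<lambda>a b. f b a) (a # xs)" using False by (simp add: ops_Cons_Cons)
    finally show ?thesis .
  qed
qed

lemma tn_opp: "tn (opposite b) (opposite a) = - tn a b"
  by (cases a; cases b) (auto simp: tn_def)

lemma ct_revc: "ct (revc p) = - ct p"
proof (cases "p = []")
  case True then show ?thesis by (simp add: ct_def revc_def)
next
  case False
  have "ops tn (revc p) = - ops tn p"
    unfolding revc_def ops_map ops_rev tn_opp
    by (induction tn p rule: ops.induct) (auto simp: tn_opp)
  then show ?thesis using False unfolding ct_def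
    by (simp add: revc_def hd_map last_map hd_rev last_rev tn_opp)
qed

lemma pts_revc:
  assumes "endp z p = z" "p \<noteq> []"
  shows "pts z (revc p) = rev (ends z p)"
proof -
  have "pts z (revc p) = map fst (edges (endp z p) (revc p))" using assms(1) by (simp add: pts_def)
  also have "\<dots> = rev (ends z p)" unfolding edges_revc ends_def by (simp add: rev_map case_prod_unfold comp_def)
  finally show ?thesis .
qed

lemma endp_revc: "endp (endp z p) (revc p) = z"
proof (induction p arbitrary: z rule: rev_induct)
  case Nil then show ?case by (simp add: revc_def)
next
  case (snoc s q) then show ?case by (simp add: revc_def)
qed

lemma valid_revc: 
  assumes "valid z p" shows "valid z (revc p)"
proof -
  have c: "endp z p = z" and d: "distinct (pts z p)" and l: "3 \<le> length p" using assms unfolding valid_def by auto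
  have ne: "p \<noteq> []" using l by auto
  have "endp z (revc p) = z" using endp_revc[of z p] c by simp
  moreover have "distinct (pts z (revc p))" unfolding pts_revc[OF c ne] using closed_ends_distinct[OF c ne d] by simp
  moreover have "3 \<le> length (revc p)" using l by (simp add: revc_def)
  ultimately show ?thesis unfolding valid_def by simp
qed

lemma set_pts_revc: "endp z p = z \<Longrightarrow> p \<noteq> [] \<Longrightarrow> set (pts z (revc p)) = set (pts z p)"
  using pts_revc closed_ends_set by simp

lemma good_revc: "endp z p = z \<Longrightarrow> good z (revc p) \<longleftrightarrow> good z p"
proof
  assume c: "endp z p = z" and g: "good z (revc p)"
  then obtain \<sigma>::int where "(\<sigma> = 1 \<or> \<sigma> = -1) \<and> ct (revc p) = 4 * \<sigma> \<and> (\<forall>c. W z (revc p) c = 0 \<or> W z (revc p) c = - \<sigma>) \<and> \<sigma> * AR z (revc p) < 0"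
    unfolding good_def by blast
  then show "good z p" unfolding good_def ct_revc W_revc[OF c] AR_revc[OF c]
    by (intro exI[of _ "-\<sigma>"]) auto
next
  assume c: "endp z p = z" and g: "good z p"
  then obtain \<sigma>::int where "(\<sigma> = 1 \<or> \<sigma> = -1) \<and> ct p = 4 * \<sigma> \<and> (\<forall>c. W z p c = 0 \<or> W z p c = - \<sigma>) \<and> \<sigma> * AR z p < 0"
    unfolding good_def by blast
  then show "good z (revc p)" unfolding good_def ct_revc W_revc[OF c] AR_revc[OF c]
    by (intro exI[of _ "-\<sigma>"]) (auto; blast)
qed


lemma sum_list_delta:
  "distinct xs \<Longrightarrow> sum_list (map (\<lambda>x. if x = y then c else 0) xs) = (if y \<in> set xs then c else (0::int))"
  by (induction xs) auto

lemma sum_list_add3: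
  "sum_list (map (\<lambda>x. f x + g x + h x) xs) = sum_list (map f xs) + sum_list (map g xs) + sum_list (map h xs)"
  for f :: "_ \<Rightarrow> int"
  by (induction xs) auto

lemma sum_list_add5:
  "sum_list (map (\<lambda>x. f x + g x + h x + k x - m x) xs) = sum_list (map f xs) + sum_list (map g xs) + sum_list (map h xs) + sum_list (map k xs) - sum_list (map m xs)"
  for f :: "_ \<Rightarrow> int"
  by (induction xs) auto

lemma hw_vert: "hw (a,b) e = hw (a,b+1) e + (if e = ((a,b+1),R) then -1 else 0) + (if e = ((a+1,b+1),L) then 1 else 0)"
  by (cases e) (auto split: if_splits)

lemma W_vert:
  assumes "distinct (pts z p)"
  shows "W z p (a,b) = W z p (a,b+1) + (if ((a,b+1),R) \<in> set (edges z p) then -1 else 0)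
                      + (if ((a+1,b+1),L) \<in> set (edges z p) then 1 else 0)"
proof -
  have de: "distinct (edges z p)" using distinct_edges[OF assms] .
  have "W z p (a,b) = sum_list (map (\<lambda>e. hw (a,b+1) e + (if e = ((a,b+1),R) then -1 else 0) + (if e = ((a+1,b+1),L) then 1 else 0)) (edges z p))"
    unfolding W_def using hw_vert by metis
  also have "\<dots> = W z p (a,b+1) + (if ((a,b+1),R) \<in> set (edges z p) then -1 else 0)
                      + (if ((a+1,b+1),L) \<in> set (edges z p) then 1 else 0)"
    unfolding sum_list_add3 sum_list_delta[OF de] W_def by simp
  finally show ?thesis .
qed

definition Gq :: "int \<Rightarrow> int \<Rightarrow> int \<times> int \<Rightarrow> int" where
  "Gq a b v = (if a \<le> fst v \<and> b \<le> snd v then 1 else 0)"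

lemma telescope:
  "sum_list (map (\<lambda>(v,s). G (mv v s) - G v) (edges z p)) = G (endp z p) - (G z :: int)"
  by (induction p arbitrary: z) auto

lemma hw_horiz: "hw (a+1,b) e = hw (a,b) e + (if e = ((a+1,b),U) then -1 else 0) + (if e = ((a+1,b+1),D) then 1 else 0)
   + (case e of (v,s) \<Rightarrow> Gq (a+1) (b+1) (mv v s) - Gq (a+1) (b+1) v)
   - (case e of (v,s) \<Rightarrow> Gq (a+2) (b+1) (mv v s) - Gq (a+2) (b+1) v)"
proof -
  obtain x y s where e: "e = ((x,y),s)" by (metis surj_pair)
  show ?thesis unfolding e by (cases s) (auto simp: Gq_def)
qed

lemma W_horiz:
  assumes "distinct (pts z p)" "endp z p = z"
  shows "W z p (a+1,b) = W z p (a,b) + (if ((a+1,b),U) \<in> set (edges z p) then -1 else 0)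
                      + (if ((a+1,b+1),D) \<in> set (edges z p) then 1 else 0)"
proof -
  have de: "distinct (edges z p)" using distinct_edges[OF assms(1)] .
  have t1: "sum_list (map (\<lambda>(v,s). Gq (a+1) (b+1) (mv v s) - Gq (a+1) (b+1) v) (edges z p)) = 0"
    using telescope[of "Gq (a+1) (b+1)" z p] assms(2) by simp
  have t2: "sum_list (map (\<lambda>(v,s). Gq (a+2) (b+1) (mv v s) - Gq (a+2) (b+1) v) (edges z p)) = 0"
    using telescope[of "Gq (a+2) (b+1)" z p] assms(2) by simp
  have "W z p (a+1,b) = sum_list (map (\<lambda>e. hw (a,b) e + (if e = ((a+1,b),U) then -1 else 0) + (if e = ((a+1,b+1),D) then 1 else 0)
   + (case e of (v,s) \<Rightarrow> Gq (a+1) (b+1) (mv v s) - Gq (a+1) (b+1) v)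
   - (case e of (v,s) \<Rightarrow> Gq (a+2) (b+1) (mv v s) - Gq (a+2) (b+1) v)) (edges z p))"
    unfolding W_def using hw_horiz by metis
  also have "\<dots> = W z p (a,b) + (if ((a+1,b),U) \<in> set (edges z p) then -1 else 0)
                      + (if ((a+1,b+1),D) \<in> set (edges z p) then 1 else 0)"
    unfolding sum_list_add5 sum_list_delta[OF de] W_def t1 t2 by simp
  finally show ?thesis .
qed

lemma W_vert':
  assumes "distinct (pts z p)"
  shows "W z p (a,b - 1) = W z p (a,b) + (if ((a,b),R) \<in> set (edges z p) then -1 else 0)
                      + (if ((a+1,b),L) \<in> set (edges z p) then 1 else 0)"
  using W_vert[OF assms, of a "b - 1"] by simp

lemma W_horiz':
  assumes "distinct (pts z p)" "endp z p = z"
  shows "W z p (a,b) = W z p (a - 1,b) + (if ((a,b),U) \<in> set (edges z p) then -1 else 0)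
                      + (if ((a,b+1),D) \<in> set (edges z p) then 1 else 0)"
  using W_horiz[OF assms, of "a - 1" b] by simp

definition cl :: "int \<times> int \<Rightarrow> step list \<Rightarrow> bool" where
  "cl z p \<longleftrightarrow> endp z p = z \<and> distinct (pts z p) \<and> p \<noteq> []"

lemma not_in_edges_start: "v \<notin> set (pts z p) \<Longrightarrow> (v,s) \<notin> set (edges z p)"
  using edge_start_in by blast

lemma not_in_edges_end: "cl z p \<Longrightarrow> mv v s \<notin> set (pts z p) \<Longrightarrow> (v,s) \<notin> set (edges z p)"
  using edge_end_in unfolding cl_def by blast

lemma W_const:
  assumes "cl z p" "(x,y) \<notin> set (pts z p)"
  shows "W z p (x - 1, y - 1) = W z p (x, y)" "W z p (x, y - 1) = W z p (x, y)" "W z p (x - 1, y) = W z p (x, y)"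
proof -
  have c: "endp z p = z" and d: "distinct (pts z p)" using assms(1) unfolding cl_def by auto
  have n1: "((x,y),s) \<notin> set (edges z p)" for s using not_in_edges_start[OF assms(2)] .
  have n2: "((x+1,y),L) \<notin> set (edges z p)" using not_in_edges_end[OF assms(1), of "(x+1,y)" L] assms(2) by simp
  have n3: "((x-1,y),R) \<notin> set (edges z p)" using not_in_edges_end[OF assms(1), of "(x-1,y)" R] assms(2) by simp
  have n4: "((x,y+1),D) \<notin> set (edges z p)" using not_in_edges_end[OF assms(1), of "(x,y+1)" D] assms(2) by simp
  have e1: "W z p (x, y - 1) = W z p (x, y)" using W_vert'[OF d, of x y] n1 n2 by simp
  have e2: "W z p (x - 1, y - 1) = W z p (x - 1, y)" using W_vert'[OF d, of "x - 1" y] n1 n3 by simp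
  have e3: "W z p (x, y) = W z p (x - 1, y)" using W_horiz'[OF d c, of x y] n1 n4 by simp
  show "W z p (x - 1, y - 1) = W z p (x, y)" "W z p (x, y - 1) = W z p (x, y)" "W z p (x - 1, y) = W z p (x, y)"
    using e1 e2 e3 by auto
qed

lemma W_move:
  assumes "cl z p" "v \<notin> set (pts z p)" "mv v s \<notin> set (pts z p)"
  shows "W z p (mv v s) = W z p v"
proof -
  obtain x y where v: "v = (x,y)" by (metis surj_pair)
  show ?thesis
  proof (cases s)
    case U
    then show ?thesis using W_const(2)[OF assms(1), of x "y+1"] assms(3) v by simp
  next
    case R
    then show ?thesis using W_const(3)[OF assms(1), of "x+1" y] assms(3) v by simp
  next
    case D
    then show ?thesis using W_const(2)[OF assms(1), of x y] assms(2) v by simp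
  next
    case L
    then show ?thesis using W_const(3)[OF assms(1), of x y] assms(2) v by simp
  qed
qed

lemma W_path:
  assumes "cl z p" "\<forall>u \<in> set (pts w ss @ [endp w ss]). u \<notin> set (pts z p)"
  shows "W z p (endp w ss) = W z p w"
  using assms(2)
proof (induction ss arbitrary: w)
  case Nil then show ?case by simp
next
  case (Cons s ss)
  have "W z p (endp (mv w s) ss) = W z p (mv w s)"
    using Cons.IH Cons.prems by simp
  moreover have "mv w s \<in> set (pts (mv w s) ss @ [endp (mv w s) ss])" by (cases ss) auto
  then have "mv w s \<notin> set (pts z p)" using Cons.prems by auto
  moreover have "w \<notin> set (pts z p)" using Cons.prems by simp
  ultimately show ?case using W_move[OF assms(1)] by simp
qed

lemma sum_list_zero: "(\<forall>x \<in> set xs. f x = (0::int)) \<Longrightarrow> sum_list (map f xs) = 0"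
  by (induction xs) auto

lemma W_top:
  assumes "\<forall>u \<in> set (pts z p). snd u \<le> b"
  shows "W z p (a,b) = 0"
proof -
  have "\<forall>e \<in> set (edges z p). hw (a,b) e = 0"
  proof
    fix e assume "e \<in> set (edges z p)"
    then obtain x y s where e: "e = ((x,y),s)" "(x,y) \<in> set (pts z p)"
      using edge_start_in by (metis surj_pair)
    then have "y \<le> b" using assms by auto
    then show "hw (a,b) e = 0" using e by auto
  qed
  then show ?thesis unfolding W_def by (rule sum_list_zero) 
qed


lemma W_Nil[simp]: "W z [] c = 0" by (simp add: W_def)
lemma W_Cons: "W z (s#ss) c = hw c (z,s) + W (mv z s) ss c" by (simp add: W_def)
lemma W_append: "W z (X @ Y) c = W z X c + W (endp z X) Y c" by (simp add: W_def edges_append)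
lemma AR_Nil[simp]: "AR z [] = 0" by (simp add: AR_def)
lemma AR_Cons: "AR z (s#ss) = cr (z,s) + AR (mv z s) ss" by (simp add: AR_def)
lemma AR_append: "AR z (X @ Y) = AR z X + AR (endp z X) Y" by (simp add: AR_def edges_append)

lemma ct_Cons2: "ss \<noteq> [] \<Longrightarrow> ct (x # y # ss) = tn x y + tn y (hd ss) + ops tn ss + tn (last ss) x"
  unfolding ct_def by (cases ss) auto

lemma ct_Cons2_snoc: "ss \<noteq> [] \<Longrightarrow> ct (x # y # ss @ [t]) = tn x y + tn y (hd ss) + ops tn ss + tn (last ss) t + tn t x"
proof -
  assume ne: "ss \<noteq> []"
  have "ops tn (y # ss @ [t]) = ops tn (y # ss) + tn (last ss) t"
    using ops_append[of "y # ss" "[t]" tn] ne by simp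
  then show ?thesis unfolding ct_def using ne by (cases ss) auto
qed

lemma last_edge:
  assumes "ss \<noteq> []"
  shows "(endp w (butlast ss), last ss) \<in> set (edges w ss)" "mv (endp w (butlast ss)) (last ss) = endp w ss"
proof -
  have ss: "ss = butlast ss @ [last ss]" using assms by simp
  have "edges w ss = edges w (butlast ss) @ [(endp w (butlast ss), last ss)]"
    by (subst ss) (simp add: edges_append)
  then show "(endp w (butlast ss), last ss) \<in> set (edges w ss)" by simp
  show "mv (endp w (butlast ss)) (last ss) = endp w ss" by (subst (2) ss) simp
qed

lemma hd_edge: "ss \<noteq> [] \<Longrightarrow> (w, hd ss) \<in> set (edges w ss)"
  by (cases ss) auto

lemma in_pts_split:
  "v \<in> set (pts z p) \<Longrightarrow> \<exists>X Y. p = X @ Y \<and> endp z X = v \<and> Y \<noteq> []"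
proof (induction p arbitrary: z)
  case Nil then show ?case by simp
next
  case (Cons s ss)
  show ?case
  proof (cases "v = z")
    case True then show ?thesis by (intro exI[of _ "[]"] exI[of _ "s#ss"]) auto
  next
    case False
    then have "v \<in> set (pts (mv z s) ss)" using Cons.prems by simp
    then obtain X Y where "ss = X @ Y" "endp (mv z s) X = v" "Y \<noteq> []" using Cons.IH by blast
    then show ?thesis by (intro exI[of _ "s#X"] exI[of _ Y]) auto
  qed
qed

lemma start_unique':
  "cl z p \<Longrightarrow> (v,s) \<in> set (edges z p) \<Longrightarrow> s' \<noteq> s \<Longrightarrow> (v,s') \<notin> set (edges z p)"
  using edge_start_unique unfolding cl_def by blast

lemma end_unique':
  "cl z p \<Longrightarrow> (v,s) \<in> set (edges z p) \<Longrightarrow> mv v' s' = mv v s \<Longrightarrow> v' \<noteq> v \<Longrightarrow> (v',s') \<notin> set (edges z p)"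
  using edge_end_unique unfolding cl_def by blast

lemma valid_cl: "valid z p \<Longrightarrow> cl z p"
  unfolding valid_def cl_def by auto

lemma good_transfer:
  assumes "good z1 p1" "W z1 p1 c0 = -1" "W z1 p1 c1 = 0" "ct p0 = ct p1"
    "\<forall>c. W z0 p0 c = W z1 p1 c + (if c = c1 then -1 else 0)" "AR z0 p0 = AR z1 p1 - 2"
  shows "good z0 p0"
proof -
  obtain \<sigma>::int where s: "\<sigma> = 1 \<or> \<sigma> = -1" "ct p1 = 4 * \<sigma>" "\<forall>c. W z1 p1 c = 0 \<or> W z1 p1 c = - \<sigma>" "\<sigma> * AR z1 p1 < 0"
    using assms(1) unfolding good_def by blast
  have "\<sigma> = 1" using s(1) s(3)[rule_format, of c0] assms(2) by auto
  then show ?thesis unfolding good_def using s assms(3-6)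
    by (intro exI[of _ 1]) auto
qed

definition topl :: "int \<times> int \<Rightarrow> (int \<times> int) set \<Rightarrow> bool" where
  "topl A S \<longleftrightarrow> (\<forall>v\<in>S. snd v \<le> snd A + 1 \<and> (snd v = snd A + 1 \<longrightarrow> fst A \<le> fst v))"

definition muS :: "(int \<times> int) set \<Rightarrow> nat" where
  "muS S = (\<Sum>v\<in>S. nat (snd v - Min (snd ` S)))"


lemma mu_lt:
  assumes "finite Rs" "A \<notin> Rs" "P \<notin> Rs" "Q \<notin> Rs" "A \<noteq> P" "A \<noteq> Q" "P \<noteq> Q"
    "snd Q = snd A" "snd P = snd A + 1"
  shows "muS (insert A (insert Q Rs)) < muS (insert A (insert P Rs))"
proof -
  let ?S0 = "insert A (insert P Rs)" and ?S1 = "insert A (insert Q Rs)"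
  define m where "m = Min (snd ` ?S0)"
  have f0: "finite (snd ` ?S0)" "finite (snd ` ?S1)" using assms(1) by auto
  have sub: "snd ` ?S1 \<subseteq> snd ` ?S0" using assms(8) by auto
  have "m \<le> Min (snd ` ?S1)" unfolding m_def by (rule Min_antimono[OF sub]) (use f0 in auto)
  moreover have "m \<in> snd ` ?S0" unfolding m_def using f0 by (intro Min_in) auto
  moreover have "m \<le> snd A" unfolding m_def using f0 by auto
  ultimately have "m \<in> snd ` ?S1" using assms(9) by auto
  then have "Min (snd ` ?S1) \<le> m" using f0(2) Min_le by blast
  with \<open>m \<le> Min (snd ` ?S1)\<close> have m1: "Min (snd ` ?S1) = m" by simp
  have mA: "m \<le> snd A" unfolding m_def using f0 by auto
  have "muS ?S1 = nat (snd A - m) + (nat (snd Q - m) + (\<Sum>v\<in>Rs. nat (snd v - m)))"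
    unfolding muS_def m1 using assms by (simp add: sum.insert)
  moreover have "muS ?S0 = nat (snd A - m) + (nat (snd P - m) + (\<Sum>v\<in>Rs. nat (snd v - m)))"
    unfolding muS_def m_def[symmetric] using assms by (simp add: sum.insert)
  ultimately show ?thesis using assms(8,9) mA by simp
qed

lemma basic_facts:
  assumes "valid (a,b) (U#R#ss)"
  shows "cl (a,b) (U#R#ss)" "endp (a+1,b+1) ss = (a,b)" "ss \<noteq> []"
    "pts (a,b) (U#R#ss) = (a,b) # (a,b+1) # pts (a+1,b+1) ss"
    "((a,b),U) \<in> set (edges (a,b) (U#R#ss))" "((a,b+1),R) \<in> set (edges (a,b) (U#R#ss))"
    "set (edges (a+1,b+1) ss) \<subseteq> set (edges (a,b) (U#R#ss))"
    "distinct ((a,b) # (a,b+1) # pts (a+1,b+1) ss)"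
  using assms unfolding valid_def cl_def by auto

lemma hd_ss_facts:
  assumes v: "valid (a,b) (U#R#ss)"
  shows "hd ss \<noteq> L" and "(a+1,b+1) \<noteq> (a,b) \<Longrightarrow> True"
proof -
  note bf = basic_facts[OF v]
  have "((a+1,b+1), hd ss) \<in> set (edges (a,b) (U#R#ss))" using hd_edge[OF bf(3)] bf(7) by blast
  moreover have "((a+1,b+1), L) \<notin> set (edges (a,b) (U#R#ss))"
    using end_unique'[OF bf(1) bf(5), of "(a+1,b+1)" L] by simp
  ultimately show "hd ss \<noteq> L" by auto
qed simp

lemma last_ss_facts:
  assumes v: "valid (a,b) (U#R#ss)"
  shows "last ss \<noteq> D"
    and "last ss = L \<Longrightarrow> (a+1,b) \<in> set (pts (a,b) (U#R#ss)) \<and> ((a+1,b), L) \<in> set (edges (a,b) (U#R#ss))"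
proof -
  note bf = basic_facts[OF v]
  define u where "u = endp (a+1,b+1) (butlast ss)"
  have e: "(u, last ss) \<in> set (edges (a,b) (U#R#ss))" using last_edge(1)[OF bf(3)] bf(7) u_def by blast
  have m: "mv u (last ss) = (a,b)" using last_edge(2)[OF bf(3)] bf(2) u_def by simp
  show "last ss \<noteq> D"
  proof
    assume "last ss = D"
    then have "u = (a,b+1)" using m mv_inj[of u D "(a,b+1)"] by simp
    then show False using e start_unique'[OF bf(1) bf(6), of D] \<open>last ss = D\<close> by simp
  qed
  assume "last ss = L"
  then have "u = (a+1,b)" using m mv_inj[of u L "(a+1,b)"] by simp
  then show "(a+1,b) \<in> set (pts (a,b) (U#R#ss)) \<and> ((a+1,b), L) \<in> set (edges (a,b) (U#R#ss))"
    using e edge_start_in \<open>last ss = L\<close> by metis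
qed

lemma case_flip:
  assumes v: "valid (a,b) (U#R#ss)" and tl: "topl (a,b) (set (pts (a,b) (U#R#ss)))"
    and q: "(a+1,b) \<notin> set (pts (a,b) (U#R#ss))"
  shows "valid (a,b) (R#U#ss)"
    "muS (set (pts (a,b) (R#U#ss))) < muS (set (pts (a,b) (U#R#ss)))"
    "good (a,b) (R#U#ss) \<Longrightarrow> good (a,b) (U#R#ss)"
proof -
  note bf = basic_facts[OF v]
  have pn: "pts (a,b) (R#U#ss) = (a,b) # (a+1,b) # pts (a+1,b+1) ss" by simp
  show v1: "valid (a,b) (R#U#ss)"
    unfolding valid_def pn using bf q v unfolding valid_def by auto
  have c1: "cl (a,b) (R#U#ss)" using valid_cl[OF v1] .
  show "muS (set (pts (a,b) (R#U#ss))) < muS (set (pts (a,b) (U#R#ss)))"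
    unfolding pn bf(4) list.set(2) by (rule mu_lt) (use bf(8) q bf(4) in auto)
  assume g: "good (a,b) (R#U#ss)"
  have P_notin: "(a,b+1) \<notin> set (pts (a,b) (R#U#ss))" unfolding pn using bf(8) by auto
  have w0: "W (a,b) (R#U#ss) (a,b+1) = 0"
    by (rule W_top) (use tl q in \<open>auto simp: topl_def pn bf(4)\<close>)
  have n1: "((a,b+1),R) \<notin> set (edges (a,b) (R#U#ss))" using not_in_edges_start[OF P_notin] .
  have n2: "((a+1,b+1),L) \<notin> set (edges (a,b) (R#U#ss))" using not_in_edges_end[OF c1, of "(a+1,b+1)" L] P_notin by simp
  have w1: "W (a,b) (R#U#ss) (a,b) = 0"
    using W_vert[of "(a,b)" "R#U#ss" a b] c1 n1 n2 w0 unfolding cl_def by simp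
  have y1: "((a,b),R) \<in> set (edges (a,b) (R#U#ss))" by simp
  have y2: "((a+1,b),U) \<in> set (edges (a,b) (R#U#ss))" by simp
  have n3: "((a+1,b),L) \<notin> set (edges (a,b) (R#U#ss))" using start_unique'[OF c1 y2, of L] by simp
  have w2: "W (a,b) (R#U#ss) (a,b-1) = -1"
    using W_vert'[of "(a,b)" "R#U#ss" a b] c1 n3 y1 w1 unfolding cl_def by simp
  have h1: "hd ss = R \<or> hd ss = U"
  proof -
    have "hd ss \<noteq> L" using hd_ss_facts[OF v] by simp
    moreover have "hd ss \<noteq> D"
    proof
      assume "hd ss = D"
      have "((a+1,b+1), hd ss) \<in> set (edges (a,b) (U#R#ss))" using hd_edge[OF bf(3)] bf(7) by blast
      then have "mv (a+1,b+1) (hd ss) \<in> set (pts (a,b) (U#R#ss))" using edge_end_in bf(1) unfolding cl_def by blast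
      then show False using q \<open>hd ss = D\<close> by simp
    qed
    ultimately show ?thesis by (cases "hd ss") auto
  qed
  have l1: "last ss = U \<or> last ss = R"
  proof -
    have "last ss \<noteq> D" using last_ss_facts[OF v] by simp
    moreover have "last ss \<noteq> L" using last_ss_facts(2)[OF v] q by blast
    ultimately show ?thesis by (cases "last ss") auto
  qed
  have ct: "ct (U#R#ss) = ct (R#U#ss)"
    unfolding ct_Cons2[OF bf(3)] using h1 l1 by (auto simp: tn_def)
  have W: "\<forall>c. W (a,b) (U#R#ss) c = W (a,b) (R#U#ss) c + (if c = (a,b) then -1 else 0)"
  proof
    fix c :: "int \<times> int"
    obtain c1 c2 where c: "c = (c1,c2)" by (metis surj_pair)
    show "W (a,b) (U#R#ss) c = W (a,b) (R#U#ss) c + (if c = (a,b) then -1 else 0)"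
      unfolding W_Cons c by auto
  qed
  have A: "AR (a,b) (U#R#ss) = AR (a,b) (R#U#ss) - 2"
    unfolding AR_Cons by (simp add: algebra_simps)
  show "good (a,b) (U#R#ss)"
    by (rule good_transfer[OF g w2 w1 ct W A])
qed


lemma base_square: "good (a,b) [U,R,D,L]"
proof -
  have ct: "ct [U,R,D,L] = 4" by (simp add: ct_def tn_def)
  have W: "W (a,b) [U,R,D,L] c = 0 \<or> W (a,b) [U,R,D,L] c = -1" for c
  proof -
    obtain c1 c2 where c: "c = (c1,c2)" by (metis surj_pair)
    show ?thesis unfolding c W_Cons by auto
  qed
  have A: "AR (a,b) [U,R,D,L] = -2" unfolding AR_Cons by (simp add: algebra_simps)
  show ?thesis unfolding good_def using ct W A by (intro exI[of _ 1]) auto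
qed

lemma case_b1:
  assumes v: "valid (a,b) (U#R#D#rest)" and tl: "topl (a,b) (set (pts (a,b) (U#R#D#rest)))"
    and nb: "rest \<noteq> [L]"
  shows "valid (a,b) (R#rest)" "good (a,b) (R#rest) \<Longrightarrow> good (a,b) (U#R#D#rest)"
proof -
  note bf = basic_facts[OF v]
  have cl0: "endp (a+1,b) rest = (a,b)" using bf(2) by simp
  have d0: "distinct ((a,b) # (a,b+1) # (a+1,b+1) # pts (a+1,b) rest)" using bf(8) by simp
  have rne: "rest \<noteq> []" using cl0 by auto
  obtain r1 r' where r: "rest = r1 # r'" using rne by (cases rest) auto
  have r'ne: "r' \<noteq> []"
  proof
    assume "r' = []"
    then have "mv (a+1,b) r1 = (a,b)" using cl0 r by simp
    then have "r1 = L" by (cases r1) auto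
    then show False using nb r \<open>r' = []\<close> by simp
  qed
  have r1L: "r1 \<noteq> L"
  proof
    assume "r1 = L"
    then have "(a,b) \<in> set (pts (a+1,b) rest)" using r r'ne by (cases r') auto
    then show False using d0 by simp
  qed
  have r1U: "r1 \<noteq> U"
  proof
    assume "r1 = U"
    then have "(a+1,b+1) \<in> set (pts (a+1,b) rest)" using r r'ne by (cases r') auto
    then show False using d0 by simp
  qed
  have pn: "pts (a,b) (R#rest) = (a,b) # pts (a+1,b) rest" by simp
  show v1: "valid (a,b) (R#rest)"
    unfolding valid_def pn using d0 cl0 r r'ne by (cases r') auto
  have c1: "cl (a,b) (R#rest)" using valid_cl[OF v1] .
  assume g: "good (a,b) (R#rest)"
  have P_notin: "(a,b+1) \<notin> set (pts (a,b) (R#rest))" unfolding pn using d0 by auto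
  have B_notin: "(a+1,b+1) \<notin> set (pts (a,b) (R#rest))" unfolding pn using d0 by auto
  have w0: "W (a,b) (R#rest) (a,b+1) = 0"
    by (rule W_top) (use tl in \<open>auto simp: topl_def pn\<close>)
  have n1: "((a,b+1),R) \<notin> set (edges (a,b) (R#rest))" using not_in_edges_start[OF P_notin] .
  have n2: "((a+1,b+1),L) \<notin> set (edges (a,b) (R#rest))" using not_in_edges_start[OF B_notin] .
  have w1: "W (a,b) (R#rest) (a,b) = 0"
    using W_vert[of "(a,b)" "R#rest" a b] c1 n1 n2 w0 unfolding cl_def by simp
  have y1: "((a,b),R) \<in> set (edges (a,b) (R#rest))" by simp
  have y2: "((a+1,b),r1) \<in> set (edges (a,b) (R#rest))" using r by simp
  have n3: "((a+1,b),L) \<notin> set (edges (a,b) (R#rest))" using start_unique'[OF c1 y2, of L] r1L by simp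
  have w2: "W (a,b) (R#rest) (a,b-1) = -1"
    using W_vert'[of "(a,b)" "R#rest" a b] c1 n3 y1 w1 unfolding cl_def by simp
  have lD: "last rest \<noteq> D" using last_ss_facts(1)[OF v] rne by simp
  have lL: "last rest \<noteq> L"
  proof
    assume "last rest = L"
    then have "((a+1,b), L) \<in> set (edges (a,b) (U#R#D#rest))" using last_ss_facts(2)[OF v] rne by simp
    moreover have "((a+1,b), r1) \<in> set (edges (a,b) (U#R#D#rest))" using r by simp
    ultimately show False using edge_start_unique bf(1) r1L unfolding cl_def by blast
  qed
  have ct: "ct (U#R#D#rest) = ct (R#rest)"
    using r r'ne r1L r1U lD lL unfolding ct_def
    by (cases r1; cases "last rest"; cases r') (auto simp: tn_def)
  have W: "\<forall>c. W (a,b) (U#R#D#rest) c = W (a,b) (R#rest) c + (if c = (a,b) then -1 else 0)"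
  proof
    fix c :: "int \<times> int"
    obtain c1 c2 where c: "c = (c1,c2)" by (metis surj_pair)
    show "W (a,b) (U#R#D#rest) c = W (a,b) (R#rest) c + (if c = (a,b) then -1 else 0)"
      unfolding W_Cons c by auto
  qed
  have A: "AR (a,b) (U#R#D#rest) = AR (a,b) (R#rest) - 2"
    unfolding AR_Cons by (simp add: algebra_simps)
  show "good (a,b) (U#R#D#rest)"
    by (rule good_transfer[OF g w2 w1 ct W A])
qed

lemma case_b2:
  assumes v: "valid (a,b) (U#R#ss'@[L])" and tl: "topl (a,b) (set (pts (a,b) (U#R#ss'@[L])))"
    and nd: "hd (ss'@[L]) \<noteq> D"
  shows "valid (a+1,b) (U#ss')" "good (a+1,b) (U#ss') \<Longrightarrow> good (a,b) (U#R#ss'@[L])"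
proof -
  note bf = basic_facts[OF v]
  have e0: "endp (a+1,b+1) ss' = (a+1,b)"
  proof -
    have "mv (endp (a+1,b+1) ss') L = mv (a+1,b) L" using bf(2) by simp
    then show ?thesis using mv_inj by blast
  qed
  have po: "pts (a,b) (U#R#ss'@[L]) = (a,b) # (a,b+1) # pts (a+1,b+1) ss' @ [(a+1,b)]"
    using e0 by (simp add: pts_snoc)
  have d0: "distinct ((a,b) # (a,b+1) # pts (a+1,b+1) ss' @ [(a+1,b)])" using bf(8) e0 by (simp add: pts_snoc)
  have sne: "ss' \<noteq> []" using e0 by auto
  obtain s1 s'' where s: "ss' = s1 # s''" using sne by (cases ss') auto
  have s1D: "s1 \<noteq> D" using nd s by simp
  have s1L: "s1 \<noteq> L" using hd_ss_facts(1)[OF v] s by simp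
  have s''ne: "s'' \<noteq> []"
  proof
    assume "s'' = []"
    then have "mv (a+1,b+1) s1 = (a+1,b)" using e0 s by simp
    then have "s1 = D" by (cases s1) auto
    then show False using s1D by simp
  qed
  have pn: "pts (a+1,b) (U#ss') = (a+1,b) # pts (a+1,b+1) ss'" by simp
  show v1: "valid (a+1,b) (U#ss')"
    unfolding valid_def pn using d0 e0 s s''ne by (cases s'') auto
  have c1: "cl (a+1,b) (U#ss')" using valid_cl[OF v1] .
  assume g: "good (a+1,b) (U#ss')"
  have P_notin: "(a,b+1) \<notin> set (pts (a+1,b) (U#ss'))" unfolding pn using d0 by auto
  have tlb: "\<forall>v \<in> set (pts (a+1,b+1) ss'). snd v \<le> b+1" using tl unfolding topl_def po by auto
  have w0: "W (a+1,b) (U#ss') (a,b+1) = 0"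
    by (rule W_top) (use tlb in \<open>auto simp: pn\<close>)
  have n1: "((a,b+1),R) \<notin> set (edges (a+1,b) (U#ss'))" using not_in_edges_start[OF P_notin] .
  have y2: "((a+1,b+1),s1) \<in> set (edges (a+1,b) (U#ss'))" using s by simp
  have n2: "((a+1,b+1),L) \<notin> set (edges (a+1,b) (U#ss'))" using start_unique'[OF c1 y2, of L] s1L by simp
  have w1: "W (a+1,b) (U#ss') (a,b) = 0"
    using W_vert[of "(a+1,b)" "U#ss'" a b] c1 n1 n2 w0 unfolding cl_def by simp
  have y1: "((a+1,b),U) \<in> set (edges (a+1,b) (U#ss'))" by simp
  have n3: "((a+1,b+1),D) \<notin> set (edges (a+1,b) (U#ss'))" using start_unique'[OF c1 y2, of D] s1D by simp
  have w2: "W (a+1,b) (U#ss') (a+1,b) = -1"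
    using W_horiz[of "(a+1,b)" "U#ss'" a b] c1 n3 y1 w1 unfolding cl_def by simp
  define u where "u = endp (a+1,b+1) (butlast ss')"
  have eu: "(u, last ss') \<in> set (edges (a,b) (U#R#ss'@[L]))"
    using last_edge(1)[OF sne, of "(a+1,b+1)"] u_def by (simp add: edges_append)
  have mu: "mv u (last ss') = (a+1,b)" using last_edge(2)[OF sne, of "(a+1,b+1)"] u_def e0 by simp
  have lR: "last ss' \<noteq> R"
  proof
    assume "last ss' = R"
    then have "u = (a,b)" using mu mv_inj[of u R "(a,b)"] by simp
    then show False using eu start_unique'[OF bf(1) bf(5), of R] \<open>last ss' = R\<close> by simp
  qed
  have lD: "last ss' \<noteq> D"
  proof
    assume "last ss' = D"
    then have "u = (a+1,b+1)" using mu mv_inj[of u D "(a+1,b+1)"] by simp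
    moreover have "((a+1,b+1),s1) \<in> set (edges (a,b) (U#R#ss'@[L]))" using s by simp
    ultimately show False using eu edge_start_unique bf(1) s1D \<open>last ss' = D\<close> unfolding cl_def by blast
  qed
  have ct: "ct (U#R#ss'@[L]) = ct (U#ss')"
  proof -
    have "ct (U#R#ss'@[L]) = tn U R + tn R s1 + ops tn ss' + tn (last ss') L + tn L U"
      using ct_Cons2_snoc[OF sne] s by simp
    moreover have "ct (U#ss') = tn U s1 + ops tn ss' + tn (last ss') U"
      unfolding ct_def using s s''ne by (cases s'') auto
    ultimately show ?thesis using s1D s1L lR lD by (cases s1; cases "last ss'") (auto simp: tn_def)
  qed
  have W: "\<forall>c. W (a,b) (U#R#ss'@[L]) c = W (a+1,b) (U#ss') c + (if c = (a,b) then -1 else 0)"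
  proof
    fix c :: "int \<times> int"
    obtain c1 c2 where c: "c = (c1,c2)" by (metis surj_pair)
    show "W (a,b) (U#R#ss'@[L]) c = W (a+1,b) (U#ss') c + (if c = (a,b) then -1 else 0)"
      unfolding W_Cons c W_append by (auto simp: e0)
  qed
  have A: "AR (a,b) (U#R#ss'@[L]) = AR (a+1,b) (U#ss') - 2"
    unfolding AR_Cons AR_append by (simp add: e0) (simp add: algebra_simps)
  show "good (a,b) (U#R#ss'@[L])"
    by (rule good_transfer[OF g w2 w1 ct W A])
qed


lemma W_path_all:
  assumes "cl z p" "\<forall>u \<in> set (pts w ss @ [endp w ss]). u \<notin> set (pts z p)"
  shows "\<forall>u \<in> set (pts w ss @ [endp w ss]). W z p u = W z p w"
  using assms(2)
proof (induction ss arbitrary: w)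
  case Nil then show ?case by simp
next
  case (Cons s ss)
  have ih: "\<forall>u \<in> set (pts (mv w s) ss @ [endp (mv w s) ss]). W z p u = W z p (mv w s)"
    using Cons.IH Cons.prems by simp
  have "mv w s \<in> set (pts (mv w s) ss @ [endp (mv w s) ss])" by (cases ss) auto
  then have "mv w s \<notin> set (pts z p)" using Cons.prems by auto
  moreover have "w \<notin> set (pts z p)" using Cons.prems by simp
  ultimately have "W z p (mv w s) = W z p w" using W_move[OF assms(1)] by simp
  then show ?case using ih by auto
qed

lemma ct_snoc: "Y \<noteq> [] \<Longrightarrow> ct (Y @ [t]) = ops tn Y + tn (last Y) t + tn t (hd Y)"
  unfolding ct_def using ops_append[of Y "[t]" tn] by simp

lemma ct_Cons2_app: "X \<noteq> [] \<Longrightarrow> Y \<noteq> [] \<Longrightarrow>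
  ct (x # y # X @ Y) = tn x y + tn y (hd X) + ops tn X + tn (last X) (hd Y) + ops tn Y + tn (last Y) x"
  using ct_Cons2[of "X @ Y" x y] ops_append[of X Y tn] by simp

lemma hw_cancel: "hw c ((a+1,b),L) + hw c ((a,b),R) = 0"
  by (cases c) auto

lemma cr_cancel: "cr ((a+1,b),L) + cr ((a,b),R) = 0"
  by (simp add: algebra_simps)


lemma case_split:
  fixes a b :: int
  assumes v: "valid (a,b) (U#R#X@Y)" and tl: "topl (a,b) (set (pts (a,b) (U#R#X@Y)))"
    and eX: "endp (a+1,b+1) X = (a+1,b)" and Xne: "X \<noteq> []" and hX: "hd X \<noteq> D"
    and Yne: "Y \<noteq> []" and lY: "last Y \<noteq> L"
  shows "valid (a,b) (U#R#X@[L])" "valid (a+1,b) (Y@[R])"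
    "length (U#R#X@[L]) < length (U#R#X@Y)" "length (Y@[R]) < length (U#R#X@Y)"
    "good (a,b) (U#R#X@[L]) \<Longrightarrow> good (a+1,b) (Y@[R]) \<Longrightarrow> good (a,b) (U#R#X@Y)"
proof -
  note bf = basic_facts[OF v]
  define PX where "PX = pts (a+1,b+1) X"
  define PY where "PY = pts (a+1,b) Y"
  have eY: "endp (a+1,b) Y = (a,b)" using bf(2) eX by simp
  have po: "pts (a,b) (U#R#X@Y) = (a,b) # (a,b+1) # PX @ PY"
    unfolding PX_def PY_def by (simp add: pts_append eX)
  have d0: "distinct ((a,b) # (a,b+1) # PX @ PY)" using bf(1) po unfolding cl_def by metis
  have Y2: "tl Y \<noteq> []"
  proof
    assume "tl Y = []"
    then have "Y = [hd Y]" using Yne by (cases Y) auto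
    then have "mv (a+1,b) (hd Y) = (a,b)" using eY by (metis endp.simps)
    then have "hd Y = L" by (cases "hd Y") auto
    then show False using lY \<open>Y = [hd Y]\<close> by (metis last_ConsL)
  qed
  have X2: "tl X \<noteq> []"
  proof
    assume "tl X = []"
    then have "X = [hd X]" using Xne by (cases X) auto
    then have "mv (a+1,b+1) (hd X) = (a+1,b)" using eX by (metis endp.simps)
    then have "hd X = D" by (cases "hd X") auto
    then show False using hX by simp
  qed
  have Ysplit: "Y = hd Y # tl Y" using Yne by simp
  have PYh: "PY = (a+1,b) # pts (mv (a+1,b) (hd Y)) (tl Y)" unfolding PY_def by (subst Ysplit) simp
  have n1in: "mv (a+1,b) (hd Y) \<in> set (pts (mv (a+1,b) (hd Y)) (tl Y))" using Y2 by (cases "tl Y") auto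
  have BPX: "(a+1,b+1) \<in> set PX" unfolding PX_def using Xne by (cases X) auto
  have p1: "pts (a,b) (U#R#X@[L]) = (a,b) # (a,b+1) # PX @ [(a+1,b)]"
    unfolding PX_def by (simp add: pts_snoc eX)
  have p2: "pts (a+1,b) (Y@[R]) = PY @ [(a,b)]"
    unfolding PY_def by (simp add: pts_snoc eY)
  show v1: "valid (a,b) (U#R#X@[L])"
    unfolding valid_def p1 using d0 eX PYh by auto
  have lY2: "2 \<le> length Y"
  proof -
    have "length Y = Suc (length (tl Y))" using Yne by (cases Y) auto
    moreover have "length (tl Y) \<noteq> 0" using Y2 by (simp del: length_tl)
    ultimately show ?thesis by linarith
  qed
  have dPY: "distinct (PY @ [(a,b)])" using d0 by auto
  show v2: "valid (a+1,b) (Y@[R])"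
    unfolding valid_def p2 using dPY eY lY2 by simp
  show "length (U#R#X@[L]) < length (U#R#X@Y)" using lY2 by simp
  show "length (Y@[R]) < length (U#R#X@Y)" by simp
  assume g1: "good (a,b) (U#R#X@[L])" and g2: "good (a+1,b) (Y@[R])"
  have cl1: "cl (a,b) (U#R#X@[L])" using valid_cl[OF v1] .
  have cl2: "cl (a+1,b) (Y@[R])" using valid_cl[OF v2] .
  have d1: "distinct (pts (a,b) (U#R#X@[L]))" and c1: "endp (a,b) (U#R#X@[L]) = (a,b)"
    using cl1 unfolding cl_def by auto
  have d2: "distinct (pts (a+1,b) (Y@[R]))" and c2: "endp (a+1,b) (Y@[R]) = (a+1,b)"
    using cl2 unfolding cl_def by auto
  have e1: "edges (a,b) (U#R#X@[L]) = ((a,b),U) # ((a,b+1),R) # edges (a+1,b+1) X @ [((a+1,b),L)]"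
    by (simp add: edges_append eX)
  have e2: "edges (a+1,b) (Y@[R]) = edges (a+1,b) Y @ [((a,b),R)]"
    by (simp add: edges_append eY)
  have eo: "edges (a,b) (U#R#X@Y) = ((a,b),U) # ((a,b+1),R) # edges (a+1,b+1) X @ edges (a+1,b) Y"
    by (simp add: edges_append eX)
  define zq where "zq = last X"
  define yq where "yq = hd Y"
  define xa where "xa = last Y"
  define u where "u = endp (a+1,b+1) (butlast X)"
  define w where "w = endp (a+1,b) (butlast Y)"
  have eu: "(u,zq) \<in> set (edges (a+1,b+1) X)" using last_edge(1)[OF Xne] u_def zq_def by simp
  have mu: "mv u zq = (a+1,b)" using last_edge(2)[OF Xne] u_def zq_def eX by simp
  have uPX: "u \<in> set PX" using edge_start_in[OF eu] PX_def by simp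
  have ew: "(w,xa) \<in> set (edges (a+1,b) Y)" using last_edge(1)[OF Yne] w_def xa_def by simp
  have mw: "mv w xa = (a,b)" using last_edge(2)[OF Yne] w_def xa_def eY by simp
  have eyq: "((a+1,b),yq) \<in> set (edges (a+1,b) Y)" using hd_edge[OF Yne] yq_def by simp
  have eXh: "((a+1,b+1),hd X) \<in> set (edges (a+1,b+1) X)" using hd_edge[OF Xne] by simp
  have c0: "cl (a,b) (U#R#X@Y)" using bf(1) .
  have inO: "set (edges (a+1,b+1) X) \<subseteq> set (edges (a,b) (U#R#X@Y))" "set (edges (a+1,b) Y) \<subseteq> set (edges (a,b) (U#R#X@Y))"
    unfolding eo by auto
  have in1: "set (edges (a+1,b+1) X) \<subseteq> set (edges (a,b) (U#R#X@[L]))" unfolding e1 by auto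
  have in2: "set (edges (a+1,b) Y) \<subseteq> set (edges (a+1,b) (Y@[R]))" unfolding e2 by auto
  have hXL: "hd X \<noteq> L" using hd_ss_facts(1)[OF v] Xne by simp
  have zqR: "zq \<noteq> R"
  proof
    assume "zq = R"
    then have "u = (a,b)" using mu mv_inj[of u R "(a,b)"] by simp
    then show False using uPX d0 by simp
  qed
  have zqD: "zq \<noteq> D"
  proof
    assume "zq = D"
    then have "u = (a+1,b+1)" using mu mv_inj[of u D "(a+1,b+1)"] by simp
    then have "((a+1,b+1),D) \<in> set (edges (a,b) (U#R#X@Y))" using eu inO \<open>zq = D\<close> by auto
    moreover have "((a+1,b+1),hd X) \<in> set (edges (a,b) (U#R#X@Y))" using eXh inO by auto
    ultimately show False using edge_start_unique c0 hX unfolding cl_def by blast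
  qed
  have yqL: "yq \<noteq> L"
  proof
    assume "yq = L"
    have i1: "(w,xa) \<in> set (edges (a,b) (U#R#X@Y))" using ew inO by blast
    have i2: "((a+1,b),L) \<in> set (edges (a,b) (U#R#X@Y))" using eyq inO \<open>yq = L\<close> by blast
    have i3: "mv w xa = mv (a+1,b) L" using mw by simp
    have "w = (a+1,b) \<and> xa = L"
      using edge_end_unique[OF _ _ _ i1 i2 i3] c0 unfolding cl_def by blast
    then show False using lY xa_def by simp
  qed
  have yqU: "yq \<noteq> U"
  proof
    assume "yq = U"
    have "((a,b+1),R) \<in> set (edges (a,b) (U#R#X@Y))" using eo by simp
    moreover have i2: "((a+1,b),U) \<in> set (edges (a,b) (U#R#X@Y))" using eyq inO \<open>yq = U\<close> by blast
    moreover have i3: "mv (a+1,b) U = mv (a,b+1) R" by simp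
    ultimately have "(a+1,b) = (a,b+1) \<and> U = R"
      using edge_end_unique[OF _ _ _ i2 _ i3] c0 unfolding cl_def by blast
    then show False by simp
  qed
  have xaD: "xa \<noteq> D"
  proof
    assume "xa = D"
    then have "w = (a,b+1)" using mw mv_inj[of w D "(a,b+1)"] by simp
    then have "((a,b+1),D) \<in> set (edges (a,b) (U#R#X@Y))" using ew inO \<open>xa = D\<close> by auto
    moreover have "((a,b+1),R) \<in> set (edges (a,b) (U#R#X@Y))" using eo by simp
    ultimately show False using edge_start_unique c0 unfolding cl_def by blast
  qed
  have xa: "xa = U \<or> xa = R" using xaD lY xa_def by (cases xa) auto
  have n1PY: "mv (a+1,b) yq \<in> set PY" using n1in PYh yq_def by simp
  have disj: "set PX \<inter> set PY = {}" using d0 by auto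
  have notUD: "\<not> (zq = U \<and> yq = D)"
  proof
    assume h: "zq = U \<and> yq = D"
    then have "u = mv (a+1,b) yq" using mu mv_inj[of u U "(a+1,b-1)"] by simp
    then show False using uPX n1PY disj by auto
  qed
  have notLR: "\<not> (zq = L \<and> yq = R)"
  proof
    assume h: "zq = L \<and> yq = R"
    then have "u = mv (a+1,b) yq" using mu mv_inj[of u L "(a+2,b)"] by simp
    then show False using uPX n1PY disj by auto
  qed
  have conf: "(zq = U \<and> yq = R) \<or> (zq = L \<and> yq = D)"
    using zqR zqD yqL yqU notUD notLR by (cases zq; cases yq) auto
  have S1top: "\<forall>v \<in> set (pts (a,b) (U#R#X@[L])). snd v \<le> b+1"
    using tl unfolding topl_def po p1 by auto
  have w1top: "W (a,b) (U#R#X@[L]) (a,b+1) = 0" using W_top[OF S1top] .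
  have y11: "((a,b),U) \<in> set (edges (a,b) (U#R#X@[L]))" by simp
  have y12: "((a,b+1),R) \<in> set (edges (a,b) (U#R#X@[L]))" by simp
  have y13: "((a+1,b),L) \<in> set (edges (a,b) (U#R#X@[L]))" unfolding e1 by simp
  have y14: "((a+1,b+1),hd X) \<in> set (edges (a,b) (U#R#X@[L]))" using eXh in1 by auto
  have y15: "(u,zq) \<in> set (edges (a,b) (U#R#X@[L]))" using eu in1 by auto
  have w1a: "W (a,b) (U#R#X@[L]) (a,b) = -1"
    using W_vert[OF d1, of a b] w1top y12 start_unique'[OF cl1 y14, of L] hXL by simp
  have w1b: "W (a,b) (U#R#X@[L]) (a,b-1) = 0"
    using W_vert'[OF d1, of a b] w1a y13 start_unique'[OF cl1 y11, of R] by simp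
  have w1c: "W (a,b) (U#R#X@[L]) (a+1,b) = -1"
    using W_horiz[OF d1 c1, of a b] w1a start_unique'[OF cl1 y13, of U] start_unique'[OF cl1 y14, of D] hX by simp
  have S1: "set (pts (a,b) (U#R#X@[L])) = {(a,b),(a,b+1),(a+1,b)} \<union> set PX" unfolding p1 by auto
  have S2: "set (pts (a+1,b) (Y@[R])) = set PY \<union> {(a,b)}" unfolding p2 by auto
  have QPY: "(a+1,b) \<in> set PY" using PYh by simp
  show "good (a,b) (U#R#X@Y)"
  proof (cases "zq = U \<and> yq = R")
    case True
    \<comment> \<open>impossible configuration\<close>
    have yR: "hd Y = R" using True yq_def by simp
    define Y'' where "Y'' = tl Y"
    have Yeq: "Y = R # Y''" using Ysplit yR Y''_def by simp
    define bY where "bY = butlast Y''"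
    have Y''ne: "Y'' \<noteq> []" using Y2 Y''_def by simp
    have wY: "w = endp (a+2,b) bY" unfolding w_def bY_def using Yeq Y''ne
      by (simp add: add.commute)
    have pY'': "pts (a+2,b) Y'' = pts (a+2,b) bY @ [endp (a+2,b) bY]"
      using pts_snoc[of "(a+2,b)" bY "last Y''"] Y''ne bY_def by simp
    have PYe: "PY = (a+1,b) # pts (a+2,b) Y''" unfolding PY_def using Yeq by (simp add: add.commute)
    have dPY: "distinct PY" using d0 by simp
    have nots1: "\<forall>v \<in> set (pts (a+2,b) bY @ [endp (a+2,b) bY]). v \<notin> set (pts (a,b) (U#R#X@[L]))"
    proof
      fix v assume "v \<in> set (pts (a+2,b) bY @ [endp (a+2,b) bY])"
      then have vin: "v \<in> set (pts (a+2,b) Y'')" using pY'' by simp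
      then have "v \<in> set PY" "v \<noteq> (a+1,b)" using PYe dPY by auto
      then show "v \<notin> set (pts (a,b) (U#R#X@[L]))" unfolding S1 using d0 disj by auto
    qed
    have "W (a,b) (U#R#X@[L]) w = W (a,b) (U#R#X@[L]) (a+2,b)"
      using W_path_all[OF cl1 nots1] wY by simp
    moreover have "(a+2,b) \<notin> set (pts (a,b) (U#R#X@[L]))"
      using nots1 by (cases bY) auto
    then have "W (a,b) (U#R#X@[L]) (a+1,b) = W (a,b) (U#R#X@[L]) (a+2,b)"
      using W_const(3)[OF cl1, of "a+2" b] by (simp add: add.commute)
    ultimately have Ww: "W (a,b) (U#R#X@[L]) w = -1" using w1c by simp
    show ?thesis
    proof (cases "xa = U")
      case True
      then have "w = (a,b-1)" using mw mv_inj[of w U "(a,b-1)"] by simp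
      then show ?thesis using Ww w1b by simp
    next
      case False
      then have "xa = R" using xa by simp
      then have "w = (a-1,b)" using mw mv_inj[of w R "(a-1,b)"] by simp
      moreover have "W (a,b) (U#R#X@[L]) (a-1,b) = 0"
        using W_horiz'[OF d1 c1, of a b] w1a y11 start_unique'[OF cl1 y12, of D] by simp
      ultimately show ?thesis using Ww by simp
    qed
  next
    case False
    then have zL: "zq = L" and yD: "yq = D" using conf by auto
    have ct0: "ct (U#R#X@Y) = tn U R + tn R (hd X) + ops tn X + tn zq yq + ops tn Y + tn xa U"
      using ct_Cons2_app[OF Xne Yne] zq_def yq_def xa_def by simp
    have ct1: "ct (U#R#X@[L]) = tn U R + tn R (hd X) + ops tn X + tn zq L + tn L U"
      using ct_Cons2_snoc[OF Xne] zq_def by simp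
    have ct2: "ct (Y@[R]) = ops tn Y + tn xa R + tn R yq"
      using ct_snoc[OF Yne] xa_def yq_def by simp
    have ctr: "ct (U#R#X@Y) = ct (U#R#X@[L]) + ct (Y@[R]) - 4"
      unfolding ct0 ct1 ct2 using zL yD xa by (auto simp: tn_def)
    have Wsum: "W (a,b) (U#R#X@Y) c = W (a,b) (U#R#X@[L]) c + W (a+1,b) (Y@[R]) c" for c
      unfolding W_def e1 e2 eo using hw_cancel[of c a b] by simp
    have Asum: "AR (a,b) (U#R#X@Y) = AR (a,b) (U#R#X@[L]) + AR (a+1,b) (Y@[R])"
      unfolding AR_def e1 e2 eo using cr_cancel[of a b] by (simp del: cr.simps)
    obtain s1::int where s1: "s1 = 1 \<or> s1 = -1" "ct (U#R#X@[L]) = 4 * s1"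
      "\<forall>c. W (a,b) (U#R#X@[L]) c = 0 \<or> W (a,b) (U#R#X@[L]) c = - s1" "s1 * AR (a,b) (U#R#X@[L]) < 0"
      using g1 unfolding good_def by blast
    have s1v: "s1 = 1" using s1(1) s1(3)[rule_format, of "(a,b)"] w1a by auto
    have S2top: "\<forall>v \<in> set (pts (a+1,b) (Y@[R])). snd v \<le> b+1"
      using tl unfolding topl_def po p2 by auto
    have w2top: "W (a+1,b) (Y@[R]) (a,b+1) = 0" using W_top[OF S2top] .
    have Pn2: "(a,b+1) \<notin> set (pts (a+1,b) (Y@[R]))" unfolding S2 using d0 by auto
    have Bn2: "(a+1,b+1) \<notin> set (pts (a+1,b) (Y@[R]))" unfolding S2 using d0 BPX disj by auto
    have w2a: "W (a+1,b) (Y@[R]) (a,b) = 0"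
      using W_vert[OF d2, of a b] w2top not_in_edges_start[OF Pn2] not_in_edges_start[OF Bn2] by simp
    have y21: "((a,b),R) \<in> set (edges (a+1,b) (Y@[R]))" unfolding e2 by simp
    have y22: "((a+1,b),D) \<in> set (edges (a+1,b) (Y@[R]))" using eyq in2 yD by auto
    have w2b: "W (a+1,b) (Y@[R]) (a,b-1) = -1"
      using W_vert'[OF d2, of a b] w2a y21 start_unique'[OF cl2 y22, of L] by simp
    obtain s2::int where s2: "s2 = 1 \<or> s2 = -1" "ct (Y@[R]) = 4 * s2"
      "\<forall>c. W (a+1,b) (Y@[R]) c = 0 \<or> W (a+1,b) (Y@[R]) c = - s2" "s2 * AR (a+1,b) (Y@[R]) < 0"
      using g2 unfolding good_def by blast
    have s2v: "s2 = 1" using s2(1) s2(3)[rule_format, of "(a,b-1)"] w2b by auto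
    define bX where "bX = butlast X"
    have pX: "PX = pts (a+1,b+1) bX @ [u]"
      unfolding PX_def bX_def u_def using pts_snoc[of "(a+1,b+1)" "butlast X" "last X"] Xne by simp
    have pathP: "pts (a,b+1) (R # bX) @ [endp (a,b+1) (R # bX)] = (a,b+1) # PX"
      unfolding pX u_def bX_def by simp
    have alpha0: "\<forall>v \<in> set ((a,b+1) # PX). v \<notin> set (pts (a+1,b) (Y@[R]))"
      unfolding S2 using d0 disj by auto
    have alpha1: "\<forall>v \<in> set ((a,b+1) # PX). W (a+1,b) (Y@[R]) v = 0"
      using W_path_all[OF cl2, of "(a,b+1)" "R # bX"] alpha0 w2top unfolding pathP by simp
    have alpha: "W (a+1,b) (Y@[R]) (x - 1, y - 1) = 0 \<and> W (a+1,b) (Y@[R]) (x, y - 1) = 0"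
      if "(x,y) \<in> set (pts (a,b) (U#R#X@[L]))" "(x,y) \<noteq> (a,b)" "(x,y) \<noteq> (a+1,b)" for x y
    proof -
      have "(x,y) \<in> set ((a,b+1) # PX)" using that unfolding S1 by auto
      then have "W (a+1,b) (Y@[R]) (x,y) = 0" "(x,y) \<notin> set (pts (a+1,b) (Y@[R]))"
        using alpha0 alpha1 by auto
      then show ?thesis using W_const[OF cl2, of x y] by simp
    qed
    define Y'' where "Y'' = tl Y"
    have Yeq: "Y = D # Y''" using Ysplit yD yq_def Y''_def by simp
    have Y''ne: "Y'' \<noteq> []" using Y2 Y''_def by simp
    define bY where "bY = butlast Y''"
    have pY'': "pts (a+1,b-1) Y'' = pts (a+1,b-1) bY @ [endp (a+1,b-1) bY]"
      using pts_snoc[of "(a+1,b-1)" bY "last Y''"] Y''ne bY_def by simp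
    have PYe: "PY = (a+1,b) # pts (a+1,b-1) Y''" unfolding PY_def using Yeq by simp
    have dPY: "distinct PY" using d0 by simp
    have beta0: "\<forall>v \<in> set (pts (a+1,b-1) bY @ [endp (a+1,b-1) bY]). v \<notin> set (pts (a,b) (U#R#X@[L]))"
    proof
      fix v assume "v \<in> set (pts (a+1,b-1) bY @ [endp (a+1,b-1) bY])"
      then have vin: "v \<in> set (pts (a+1,b-1) Y'')" using pY'' by simp
      then have "v \<in> set PY" "v \<noteq> (a+1,b)" using PYe dPY by auto
      then show "v \<notin> set (pts (a,b) (U#R#X@[L]))" unfolding S1 using d0 disj by auto
    qed
    have uL: "u = (a+2,b)" using mu zL mv_inj[of u L "(a+2,b)"] by simp
    have y16: "((a+2,b),L) \<in> set (edges (a,b) (U#R#X@[L]))" using y15 uL zL by simp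
    have w1d: "W (a,b) (U#R#X@[L]) (a+1,b-1) = 0"
      using W_vert'[OF d1, of "a+1" b] w1c y16 start_unique'[OF cl1 y13, of R]
      by (simp add: add.commute)
    have beta1: "\<forall>v \<in> set (pts (a+1,b-1) Y''). W (a,b) (U#R#X@[L]) v = 0"
      using W_path_all[OF cl1 beta0] w1d pY'' by simp
    have beta: "W (a,b) (U#R#X@[L]) (x - 1, y - 1) = 0 \<and> W (a,b) (U#R#X@[L]) (x, y - 1) = 0"
      if "(x,y) \<in> set (pts (a+1,b) (Y@[R]))" "(x,y) \<noteq> (a,b)" "(x,y) \<noteq> (a+1,b)" for x y
    proof -
      have "(x,y) \<in> set (pts (a+1,b-1) Y'')" using that unfolding S2 PYe by auto
      then have "W (a,b) (U#R#X@[L]) (x,y) = 0" "(x,y) \<notin> set (pts (a,b) (U#R#X@[L]))"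
        using beta0 beta1 pY'' by auto
      then show ?thesis using W_const[OF cl1, of x y] by simp
    qed
    have W1v: "W (a,b) (U#R#X@[L]) c = 0 \<or> W (a,b) (U#R#X@[L]) c = -1" for c using s1(3)[rule_format, of c] s1v by auto
    have W2v: "W (a+1,b) (Y@[R]) c = 0 \<or> W (a+1,b) (Y@[R]) c = -1" for c using s2(3)[rule_format, of c] s2v by auto
    have ray: "\<forall>c1 c2. b + 1 - c2 \<le> int n \<longrightarrow> \<not> (W (a,b) (U#R#X@[L]) (c1,c2) = -1 \<and> W (a+1,b) (Y@[R]) (c1,c2) = -1)" for n
    proof (induction n)
      case 0
      show ?case
      proof (intro allI impI)
        fix c1 c2 :: int assume "b + 1 - c2 \<le> int 0"
        then have "\<forall>v \<in> set (pts (a,b) (U#R#X@[L])). snd v \<le> c2" using S1top by auto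
        then show "\<not> (W (a,b) (U#R#X@[L]) (c1,c2) = -1 \<and> W (a+1,b) (Y@[R]) (c1,c2) = -1)"
          using W_top by simp
      qed
    next
      case (Suc n)
      show ?case
      proof (intro allI impI notI)
        fix c1 c2 :: int
        assume hb: "b + 1 - c2 \<le> int (Suc n)"
          and both: "W (a,b) (U#R#X@[L]) (c1,c2) = -1 \<and> W (a+1,b) (Y@[R]) (c1,c2) = -1"
        show False
        proof (cases "b + 1 \<le> c2")
          case True
          then have "\<forall>v \<in> set (pts (a,b) (U#R#X@[L])). snd v \<le> c2" using S1top by auto
          then show False using W_top both by simp
        next
          case False
          have "\<not> (W (a,b) (U#R#X@[L]) (c1,c2+1) = -1 \<and> W (a+1,b) (Y@[R]) (c1,c2+1) = -1)"
            using Suc.IH hb by auto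
          then have cs: "W (a,b) (U#R#X@[L]) (c1,c2+1) = 0 \<or> W (a+1,b) (Y@[R]) (c1,c2+1) = 0"
            using W1v W2v by blast
          have v1: "W (a,b) (U#R#X@[L]) (c1,c2) = W (a,b) (U#R#X@[L]) (c1,c2+1)
              + (if ((c1,c2+1),R) \<in> set (edges (a,b) (U#R#X@[L])) then -1 else 0)
              + (if ((c1+1,c2+1),L) \<in> set (edges (a,b) (U#R#X@[L])) then 1 else 0)"
            using W_vert[OF d1] .
          have v2: "W (a+1,b) (Y@[R]) (c1,c2) = W (a+1,b) (Y@[R]) (c1,c2+1)
              + (if ((c1,c2+1),R) \<in> set (edges (a+1,b) (Y@[R])) then -1 else 0)
              + (if ((c1+1,c2+1),L) \<in> set (edges (a+1,b) (Y@[R])) then 1 else 0)"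
            using W_vert[OF d2] .
          show False
          proof (cases "W (a,b) (U#R#X@[L]) (c1,c2+1) = 0")
            case True
            show False
            proof (cases "((c1,c2+1),R) \<in> set (edges (a,b) (U#R#X@[L]))")
              case True
              have uin: "(c1,c2+1) \<in> set (pts (a,b) (U#R#X@[L]))" using edge_start_in[OF True] .
              have "(c1,c2+1) \<noteq> (a,b)" using True start_unique'[OF cl1 y11, of R] by auto
              moreover have "(c1,c2+1) \<noteq> (a+1,b)" using True start_unique'[OF cl1 y13, of R] by auto
              ultimately have "W (a+1,b) (Y@[R]) (c1, c2 + 1 - 1) = 0" using alpha[OF uin] by blast
              then show False using both by simp
            next
              case False
              then have eL: "((c1+1,c2+1),L) \<in> set (edges (a,b) (U#R#X@[L]))"
                using v1 \<open>W (a,b) (U#R#X@[L]) (c1,c2+1) = 0\<close> both by (auto split: if_splits)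
              have uin: "(c1+1,c2+1) \<in> set (pts (a,b) (U#R#X@[L]))" using edge_start_in[OF eL] .
              have "(c1+1,c2+1) \<noteq> (a,b)" using eL start_unique'[OF cl1 y11, of L] by auto
              moreover have "(c1+1,c2+1) \<noteq> (a+1,b)"
              proof
                assume "(c1+1,c2+1) = (a+1,b)"
                then have "c1 = a" "c2 = b - 1" by auto
                then show False using w1b both by simp
              qed
              ultimately have "W (a+1,b) (Y@[R]) (c1 + 1 - 1, c2 + 1 - 1) = 0" using alpha[OF uin] by blast
              then show False using both by simp
            qed
          next
            case False
            then have W2z: "W (a+1,b) (Y@[R]) (c1,c2+1) = 0" using cs by simp
            show False
            proof (cases "((c1,c2+1),R) \<in> set (edges (a+1,b) (Y@[R]))")
              case True
              have uin: "(c1,c2+1) \<in> set (pts (a+1,b) (Y@[R]))" using edge_start_in[OF True] .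
              have "(c1,c2+1) \<noteq> (a,b)"
              proof
                assume "(c1,c2+1) = (a,b)"
                then have "c1 = a" "c2 = b - 1" by auto
                then show False using w1b both by simp
              qed
              moreover have "(c1,c2+1) \<noteq> (a+1,b)" using True start_unique'[OF cl2 y22, of R] by auto
              ultimately have "W (a,b) (U#R#X@[L]) (c1, c2 + 1 - 1) = 0" using beta[OF uin] by blast
              then show False using both by simp
            next
              case False
              then have eL: "((c1+1,c2+1),L) \<in> set (edges (a+1,b) (Y@[R]))"
                using v2 W2z both by (auto split: if_splits)
              have uin: "(c1+1,c2+1) \<in> set (pts (a+1,b) (Y@[R]))" using edge_start_in[OF eL] .
              have "(c1+1,c2+1) \<noteq> (a,b)" using eL start_unique'[OF cl2 y21, of L] by auto
              moreover have "(c1+1,c2+1) \<noteq> (a+1,b)" using eL start_unique'[OF cl2 y22, of L] by auto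
              ultimately have "W (a,b) (U#R#X@[L]) (c1 + 1 - 1, c2 + 1 - 1) = 0" using beta[OF uin] by blast
              then show False using both by simp
            qed
          qed
        qed
      qed
    qed
    have Wold: "W (a,b) (U#R#X@Y) c = 0 \<or> W (a,b) (U#R#X@Y) c = -1" for c
    proof -
      obtain c1 c2 where c: "c = (c1,c2)" by (metis surj_pair)
      have "\<not> (W (a,b) (U#R#X@[L]) (c1,c2) = -1 \<and> W (a+1,b) (Y@[R]) (c1,c2) = -1)"
        using ray[of "nat (b + 1 - c2)"] by auto
      then show ?thesis unfolding c Wsum using W1v[of "(c1,c2)"] W2v[of "(c1,c2)"] by auto
    qed
    show ?thesis unfolding good_def
      using ctr s1(2) s2(2) s1v s2v s1(4) s2(4) Asum Wold by (intro exI[of _ 1]) auto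
  qed
qed


lemma cstep:
  fixes a b :: int
  assumes v: "valid (a,b) (U#R#ss)" and tl: "topl (a,b) (set (pts (a,b) (U#R#ss)))"
    and IHl: "\<And>z' p'. length p' < length (U#R#ss) \<Longrightarrow> valid z' p' \<Longrightarrow> good z' p'"
    and IHm: "\<And>z' p'. length p' = length (U#R#ss) \<Longrightarrow> muS (set (pts z' p')) < muS (set (pts (a,b) (U#R#ss)))
               \<Longrightarrow> valid z' p' \<Longrightarrow> good z' p'"
  shows "good (a,b) (U#R#ss)"
proof -
  note bf = basic_facts[OF v]
  show ?thesis
  proof (cases "hd ss = D")
    case True
    then obtain rest where r: "ss = D # rest" using bf(3) by (cases ss) auto
    show ?thesis
    proof (cases "rest = [L]")
      case True
      then show ?thesis using r base_square by simp
    next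
      case False
      have v1: "valid (a,b) (R#rest)" using case_b1(1)[of a b rest] v tl False r by simp
      have "good (a,b) (R#rest)" using IHl[OF _ v1] r by simp
      then show ?thesis using case_b1(2)[of a b rest] v tl False r by simp
    qed
  next
    case hnD: False
    show ?thesis
    proof (cases "last ss = L")
      case True
      define ss' where "ss' = butlast ss"
      have sse: "ss = ss' @ [L]" using True bf(3) ss'_def append_butlast_last_id by metis
      have nd: "hd (ss' @ [L]) \<noteq> D" using hnD sse by simp
      have v1: "valid (a+1,b) (U#ss')" using case_b2(1)[of a b ss'] v tl nd sse by simp
      have "good (a+1,b) (U#ss')" using IHl[OF _ v1] sse by simp
      then show ?thesis using case_b2(2)[of a b ss'] v tl nd sse by simp
    next
      case lnL: False
      show ?thesis
      proof (cases "(a+1,b) \<in> set (pts (a,b) (U#R#ss))")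
        case True
        then obtain Xf Yf where xy: "U#R#ss = Xf @ Yf" "endp (a,b) Xf = (a+1,b)" "Yf \<noteq> []"
          using in_pts_split by blast
        obtain X where X: "Xf = U # R # X" "ss = X @ Yf" "X \<noteq> []" "endp (a+1,b+1) X = (a+1,b)"
        proof (cases Xf)
          case Nil then show ?thesis using xy(2) by simp
        next
          case (Cons x1 Xf')
          show ?thesis
          proof (cases Xf')
            case Nil then show ?thesis using xy Cons by simp
          next
            case (Cons x2 X)
            have h: "x1 = U" "x2 = R" "ss = X @ Yf" using xy(1) \<open>Xf = x1 # Xf'\<close> Cons by auto
            have e: "endp (a+1,b+1) X = (a+1,b)" using xy(2) \<open>Xf = x1 # Xf'\<close> Cons h by simp
            have "X \<noteq> []" using e by auto
            then show ?thesis using that[of X] h e \<open>Xf = x1 # Xf'\<close> Cons by simp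
          qed
        qed
        have hX: "hd X \<noteq> D" using hnD X by simp
        have lY: "last Yf \<noteq> L" using lnL X xy(3) by simp
        have v0: "valid (a,b) (U#R#X@Yf)" using v X by simp
        have tl0: "topl (a,b) (set (pts (a,b) (U#R#X@Yf)))" using tl X by simp
        note cs = case_split[OF v0 tl0 X(4) X(3) hX xy(3) lY]
        have g1: "good (a,b) (U#R#X@[L])" using IHl[OF _ cs(1)] cs(3) X by simp
        have g2: "good (a+1,b) (Yf@[R])" using IHl[OF _ cs(2)] cs(4) X by simp
        show ?thesis using cs(5)[OF g1 g2] X by simp
      next
        case False
        note cf = case_flip[OF v tl False]
        have "good (a,b) (R#U#ss)" using IHm[OF _ cf(2) cf(1)] by simp
        then show ?thesis using cf(3) by simp
      qed
    qed
  qed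
qed

lemma canon_RU:
  assumes v: "valid (x,y) (R # m @ [U])"
  shows "valid (x,y-1) (U # R # m)" "set (pts (x,y-1) (U#R#m)) = set (pts (x,y) (R#m@[U]))"
    "good (x,y-1) (U#R#m) \<Longrightarrow> good (x,y) (R#m@[U])"
proof -
  have c: "endp (x,y) ((R#m) @ [U]) = (x,y)" using v unfolding valid_def by simp
  have "mv (endp (x,y) (R#m)) U = mv (x,y-1) U" using c by simp
  then have e: "endp (x,y) (R#m) = (x,y-1)" using mv_inj by blast
  have v': "valid (x,y) ((R#m) @ [U])" using v by simp
  show "valid (x,y-1) (U # R # m)" using valid_rot[OF v'] e by simp
  show "set (pts (x,y-1) (U#R#m)) = set (pts (x,y) (R#m@[U]))" using set_pts_rot[OF c] e by simp
  assume "good (x,y-1) (U#R#m)"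
  then show "good (x,y) (R#m@[U])" using good_rot[OF c] e by simp
qed


lemma canon:
  assumes v: "valid z p"
  shows "\<exists>a b ss. valid (a,b) (U#R#ss) \<and> length (U#R#ss) = length p \<and>
     set (pts (a,b) (U#R#ss)) = set (pts z p) \<and> topl (a,b) (set (pts z p)) \<and>
     (good (a,b) (U#R#ss) \<longrightarrow> good z p)"
proof -
  have c: "endp z p = z" and d: "distinct (pts z p)" and l3: "3 \<le> length p" using v unfolding valid_def by auto
  define S where "S = set (pts z p)"
  have fS: "finite S" unfolding S_def by simp
  have neS: "S \<noteq> {}" unfolding S_def using l3 by (cases p) auto
  define ym where "ym = Max (snd ` S)"
  define T where "T = {v \<in> S. snd v = ym}"
  define xm where "xm = Min (fst ` T)"
  have ymin: "ym \<in> snd ` S" unfolding ym_def using fS neS by simp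
  have yle: "\<forall>v\<in>S. snd v \<le> ym" unfolding ym_def using fS by simp
  have fT: "finite T" unfolding T_def using fS by simp
  have neT: "T \<noteq> {}" unfolding T_def using ymin by auto
  have xmin: "xm \<in> fst ` T" unfolding xm_def using fT neT by simp
  have xle: "\<forall>v\<in>S. snd v = ym \<longrightarrow> xm \<le> fst v" unfolding xm_def T_def using fT T_def by auto
  have PS: "(xm,ym) \<in> S" using xmin unfolding T_def by auto
  obtain X Y where xy: "p = X @ Y" "endp z X = (xm,ym)" "Y \<noteq> []"
    using in_pts_split[of "(xm,ym)" z p] PS S_def by blast
  have c': "endp z (X @ Y) = z" using c xy(1) by simp
  define q where "q = Y @ X"
  have vq: "valid (xm,ym) q" using valid_rot[of z X Y] v xy unfolding q_def by simp
  have gq: "good (xm,ym) q \<Longrightarrow> good z p" using good_rot[OF c'] xy unfolding q_def by simp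
  have Sq: "set (pts (xm,ym) q) = S" using set_pts_rot[OF c'] xy unfolding q_def S_def by simp
  have lq: "length q = length p" unfolding q_def xy(1) by simp
  have cq: "cl (xm,ym) q" using valid_cl[OF vq] .
  have qne: "q \<noteq> []" using lq l3 by auto
  define s1 where "s1 = hd q"
  define sl where "sl = last q"
  define m where "m = butlast (tl q)"
  have qeq: "q = s1 # m @ [sl]"
  proof -
    have "tl q \<noteq> []" using lq l3 qne by (cases q) auto
    then show ?thesis unfolding s1_def sl_def m_def using qne
      by (metis append_butlast_last_id last_tl list.collapse)
  qed
  have mne: "m \<noteq> []" using lq l3 qeq by (cases m) auto
  have e1: "((xm,ym),s1) \<in> set (edges (xm,ym) q)" using qeq by simp
  have n1: "mv (xm,ym) s1 \<in> S" using edge_end_in[of "(xm,ym)" q] e1 vq qne Sq unfolding valid_def by blast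
  define w where "w = endp (xm,ym) (butlast q)"
  have ew: "(w,sl) \<in> set (edges (xm,ym) q)" using last_edge(1)[OF qne] w_def sl_def by simp
  have mw: "mv w sl = (xm,ym)" using last_edge(2)[OF qne] w_def sl_def vq unfolding valid_def by simp
  have wS: "w \<in> S" using edge_start_in[OF ew] Sq by simp
  have wv: "w = mv (xm,ym) (opposite sl)" using mw mv_opp[of w sl] by simp
  have s1U: "s1 \<noteq> U" using n1 yle by auto
  have s1L: "s1 \<noteq> L" using n1 xle by force
  have slD: "sl \<noteq> D" using wS wv yle by auto
  have slR: "sl \<noteq> R" using wS wv xle by force
  have pq: "pts (xm,ym) q = (xm,ym) # pts (mv (xm,ym) s1) m @ [endp (mv (xm,ym) s1) m]"
    using qeq by (simp add: pts_snoc)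
  have wm: "w = endp (mv (xm,ym) s1) m" unfolding w_def using qeq by (simp add: butlast_append)
  have n1m: "mv (xm,ym) s1 \<in> set (pts (mv (xm,ym) s1) m)" using mne by (cases m) auto
  have dq: "distinct (pts (xm,ym) q)" using vq unfolding valid_def by simp
  have wn1: "w \<noteq> mv (xm,ym) s1" using dq n1m wm pq by auto
  have cases2: "(s1 = R \<and> sl = U) \<or> (s1 = D \<and> sl = L)"
    using s1U s1L slD slR wn1 wv by (cases s1; cases sl) auto
  show ?thesis
  proof (cases "s1 = R \<and> sl = U")
    case True
    have vq': "valid (xm,ym) (R # m @ [U])" using vq qeq True by simp
    note cr = canon_RU[OF vq']
    show ?thesis
      apply (rule exI[of _ xm], rule exI[of _ "ym - 1"], rule exI[of _ m])
      using cr gq Sq qeq True lq yle xle unfolding topl_def S_def[symmetric] by auto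
  next
    case False
    then have h: "s1 = D" "sl = L" using cases2 by auto
    have cq': "endp (xm,ym) q = (xm,ym)" using vq unfolding valid_def by simp
    have rq: "revc q = R # map opposite (rev m) @ [U]" unfolding revc_def using qeq h by simp
    have vr: "valid (xm,ym) (R # map opposite (rev m) @ [U])" using valid_revc[OF vq] rq by simp
    have gr: "good (xm,ym) (R # map opposite (rev m) @ [U]) \<Longrightarrow> good (xm,ym) q"
      using good_revc[OF cq'] rq by simp
    have Sr: "set (pts (xm,ym) (R # map opposite (rev m) @ [U])) = S"
      using set_pts_revc[OF cq' qne] rq Sq by simp
    note cr = canon_RU[OF vr]
    show ?thesis
      apply (rule exI[of _ xm], rule exI[of _ "ym - 1"], rule exI[of _ "map opposite (rev m)"])
      using cr gq gr Sr qeq lq yle xle unfolding topl_def S_def[symmetric] by auto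
  qed
qed

lemma main_aux: "\<forall>z p. length p = n \<longrightarrow> muS (set (pts z p)) = k \<longrightarrow> valid z p \<longrightarrow> good z p"
proof (induction n arbitrary: k rule: less_induct)
  case (less n)
  note IHn = less.IH
  show ?case
  proof (induction k rule: less_induct)
    case (less k)
    note IHk = less.IH
    show ?case
    proof (intro allI impI)
      fix z p assume ln: "length p = n" and mk: "muS (set (pts z p)) = k" and v: "valid z p"
      obtain a b ss where cn: "valid (a,b) (U#R#ss)" "length (U#R#ss) = length p"
        "set (pts (a,b) (U#R#ss)) = set (pts z p)" "topl (a,b) (set (pts z p))"
        "good (a,b) (U#R#ss) \<longrightarrow> good z p"
        using canon[OF v] by blast
      have "good (a,b) (U#R#ss)"
      proof (rule cstep[OF cn(1)])
        show "topl (a,b) (set (pts (a,b) (U#R#ss)))" using cn(3,4) by simp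
      next
        fix z' p' assume h: "length p' < length (U#R#ss)" "valid z' p'"
        then have "length p' < n" using cn(2) ln by simp
        then show "good z' p'" using IHn[of "length p'" "muS (set (pts z' p'))"] h(2) by blast
      next
        fix z' p' assume "length p' = length (U#R#ss)" "muS (set (pts z' p')) < muS (set (pts (a,b) (U#R#ss)))"
          "valid z' p'"
        then have lt: "muS (set (pts z' p')) < k" and ln': "length p' = n" using cn(2,3) ln mk by auto
        have "\<forall>z p. length p = n \<longrightarrow> muS (set (pts z p)) = muS (set (pts z' p')) \<longrightarrow> valid z p \<longrightarrow> good z p"
          using IHk[OF lt] .
        then show "good z' p'" using ln' \<open>valid z' p'\<close> by blast
      qed
      then show "good z p" using cn(5) by simp
    qed
  qed
qed

lemma main: "valid z p \<Longrightarrow> good z p"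
  using main_aux by blast


lemma mv_vec: "mv v s = (fst v + fst (step_vec s), snd v + snd (step_vec s))"
  by (cases v; cases s) auto

lemma pts_map: "pts z p = map (\<lambda>i. endp z (take i p)) [0..<length p]"
proof (induction p arbitrary: z)
  case Nil then show ?case by simp
next
  case (Cons s ss)
  show ?case using Cons[of "mv z s"] by (simp add: map_upt_Suc del: upt_Suc)
qed

lemma endp_pos: "i \<le> length p \<Longrightarrow> endp (0,0) (take i p) = pos p i"
proof (induction i)
  case 0 then show ?case by (simp add: pos_def)
next
  case (Suc i)
  then have il: "i < length p" by simp
  have "take (Suc i) p = take i p @ [p ! i]" using il by (simp add: take_Suc_conv_app_nth)
  then have "endp (0,0) (take (Suc i) p) = mv (pos p i) (p ! i)" using Suc il by simp
  then show ?case by (simp add: mv_vec pos_def)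
qed

lemma pts_pos: "pts (0,0) p = map (pos p) [0..<length p]"
  unfolding pts_map using endp_pos by (intro map_cong) auto

lemma endp_pos_full: "endp (0,0) p = pos p (length p)"
  using endp_pos[of "length p" p] by simp

lemma pos_Suc: "i < length p \<Longrightarrow> pos p (Suc i) = mv (pos p i) (p ! i)"
  by (simp add: mv_vec pos_def)

lemma edges_zip: "edges z p = zip (pts z p) p"
  by (induction p arbitrary: z) auto

lemma AR_area: "AR (0,0) p = signed_area2 p"
proof -
  have "AR (0,0) p = (\<Sum>i = 0..<length p. cr (zip (pts (0,0) p) p ! i))"
    unfolding AR_def edges_zip sum_list_sum_nth by simp
  also have "\<dots> = (\<Sum>i<length p. fst (pos p i) * snd (pos p (Suc i)) - fst (pos p (Suc i)) * snd (pos p i))"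
    by (rule sum.cong) (auto simp: pts_pos pos_Suc)
  finally show ?thesis unfolding signed_area2_def .
qed

lemma ops_sum: "ops f xs = (\<Sum>i < length xs - 1. f (xs ! i) (xs ! Suc i))"
proof (induction xs rule: induct_list012)
  case 1 then show ?case by simp
next
  case (2 x) then show ?case by simp
next
  case (3 a b xs)
  have "(\<Sum>i < length (a # b # xs) - 1. f ((a # b # xs) ! i) ((a # b # xs) ! Suc i))
      = (\<Sum>i < Suc (length xs). f ((a # b # xs) ! i) ((a # b # xs) ! Suc i))" by simp
  also have "\<dots> = f a b + (\<Sum>i < length xs. f ((b # xs) ! i) ((b # xs) ! Suc i))"
    by (subst sum.lessThan_Suc_shift) simp
  finally show ?case using 3 by simp
qed

lemma ct_sum:
  assumes "p \<noteq> []"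
  shows "ct p = (\<Sum>i < length p. tn (p ! i) (p ! (Suc i mod length p)))"
proof -
  define n where "n = length p"
  have n: "n = Suc (n - 1)" using assms n_def by simp
  have "(\<Sum>i < n. tn (p ! i) (p ! (Suc i mod n))) = (\<Sum>i < n - 1. tn (p ! i) (p ! (Suc i mod n))) + tn (p ! (n-1)) (p ! (Suc (n-1) mod n))"
    by (subst n) (simp only: sum.lessThan_Suc)
  also have "(\<Sum>i < n - 1. tn (p ! i) (p ! (Suc i mod n))) = (\<Sum>i < n - 1. tn (p ! i) (p ! Suc i))"
    by (rule sum.cong) auto
  also have "p ! (Suc (n-1) mod n) = hd p" using n assms by (simp add: hd_conv_nth)
  also have "p ! (n - 1) = last p" using assms n_def by (simp add: last_conv_nth)
  finally show ?thesis unfolding ct_def ops_sum n_def using assms by simp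
qed

lemma card_as_sum: "int (card {i. i < (n::nat) \<and> P i}) = (\<Sum>i<n. if P i then 1 else 0)"
proof -
  have "card {i. i < n \<and> P i} = card {i \<in> {..<n}. P i}" by (rule arg_cong[of _ _ card]) auto
  also have "\<dots> = (\<Sum>i \<in> {i \<in> {..<n}. P i}. 1)" by simp
  also have "\<dots> = (\<Sum>i<n. if P i then 1 else 0)" using sum.inter_filter[OF finite_lessThan, where g="\<lambda>_. 1::nat" and P=P] by simp
  finally have "int (card {i. i < n \<and> P i}) = int (\<Sum>i<n. if P i then 1 else 0)" by simp
  also have "\<dots> = (\<Sum>i<n. int (if P i then 1 else 0))" by (rule of_nat_sum)
  also have "\<dots> = (\<Sum>i<n. if P i then 1 else 0)" by (rule sum.cong) auto
  finally show ?thesis .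
qed

lemma ct_cyc:
  assumes "p \<noteq> []"
  shows "(\<Sum>s\<in>{U, R, D, L}. int (cyc_turns p s (cw s)) - int (cyc_turns p (cw s) s)) = ct p"
proof -
  define n where "n = length p"
  define nx where "nx i = p ! (Suc i mod n)" for i
  have "(\<Sum>s\<in>{U, R, D, L}. int (cyc_turns p s (cw s)) - int (cyc_turns p (cw s) s))
      = (\<Sum>s\<in>{U, R, D, L}. \<Sum>i<n. (if p ! i = s \<and> nx i = cw s then 1 else 0) - (if p ! i = cw s \<and> nx i = s then 1 else 0))"
    unfolding cyc_turns_def card_as_sum n_def nx_def by (simp add: sum_subtractf)
  also have "\<dots> = (\<Sum>i<n. \<Sum>s\<in>{U, R, D, L}. (if p ! i = s \<and> nx i = cw s then 1 else 0) - (if p ! i = cw s \<and> nx i = s then 1 else 0))"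
    by (rule sum.swap)
  also have "\<dots> = (\<Sum>i<n. tn (p ! i) (nx i))"
  proof (rule sum.cong)
    fix i
    show "(\<Sum>s\<in>{U, R, D, L}. (if p ! i = s \<and> nx i = cw s then 1 else 0) - (if p ! i = cw s \<and> nx i = s then 1 else 0)) = tn (p ! i) (nx i)"
      by (cases "p ! i"; cases "nx i") (simp_all add: tn_def)
  qed simp
  finally show ?thesis unfolding ct_sum[OF assms] nx_def n_def .
qed


lemma mv2_opp: "mv (mv v s) t = v \<Longrightarrow> t = opposite s"
  by (cases v; cases s; cases t) auto

lemma part3:
  assumes "directed p" and "p \<noteq> []" and cs: "closed p \<and> self_avoiding p"
  shows "\<exists>\<sigma>::int. (\<sigma> = 1 \<or> \<sigma> = -1) \<and>
     (\<Sum>s\<in>{U, R, D, L}. int (cyc_turns p s (cw s)) - int (cyc_turns p (cw s) s)) = 4 * \<sigma> \<and> \<sigma> * signed_area2 p < 0"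
proof -
  have c: "endp (0,0) p = (0,0)" using cs endp_pos_full unfolding closed_def by simp
  have d: "distinct (pts (0,0) p)"
    using cs unfolding self_avoiding_def pts_pos by (simp add: distinct_map atLeast0LessThan)
  have l3: "3 \<le> length p"
  proof (rule ccontr)
    assume "\<not> 3 \<le> length p"
    moreover have "length p \<noteq> 0" using assms(2) by simp
    ultimately have "length p = 1 \<or> length p = 2" by linarith
    then show False
    proof
      assume "length p = 1"
      then obtain s where "p = [s]" by (cases p) auto
      then show False using c by simp
    next
      assume "length p = 2"
      then obtain s t where st: "p = [s,t]" by (cases p; cases "tl p") auto
      then have "t = opposite s" using c mv2_opp by simp
      moreover have "p ! Suc 0 \<noteq> opposite (p ! 0)" using assms(1) st unfolding directed_def by auto
      ultimately show False using st by simp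
    qed
  qed
  have "valid (0,0) p" unfolding valid_def using c d l3 by simp
  then obtain \<sigma>::int where s: "\<sigma> = 1 \<or> \<sigma> = -1" "ct p = 4 * \<sigma>" "\<sigma> * AR (0,0) p < 0"
    using main unfolding good_def by blast
  have ctv: "(\<Sum>s\<in>{U, R, D, L}. int (cyc_turns p s (cw s)) - int (cyc_turns p (cw s) s)) = 4 * \<sigma>"
    using ct_cyc[OF assms(2)] s(2) by simp
  have ar: "\<sigma> * signed_area2 p < 0" using s(3) AR_area by simp
  show ?thesis using ctv ar s(1) by blast
qed

theorem proposition2p2:
  fixes p :: "step list"
  assumes "directed p" and "p \<noteq> []"
  shows "(\<exists>k::int. \<forall>s.
            (int (turns p s (cw s)) - int (turns p (cw s) s) - k \<in> {0, 1}) \<and>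
            (int (turns p s (cw s)) - int (turns p (cw s) s) - k = 1 \<longleftrightarrow>
               (\<exists>j < cw_dist (hd p) (last p). s = (cw ^^ j) (hd p))))
       \<and> (closed p \<and> self_avoiding p \<longrightarrow>
            (clockwise p \<longrightarrow>
               (\<Sum>s\<in>{U, R, D, L}. int (cyc_turns p s (cw s)) - int (cyc_turns p (cw s) s)) = 4) \<and>
            (counterclockwise p \<longrightarrow>
               (\<Sum>s\<in>{U, R, D, L}. int (cyc_turns p s (cw s)) - int (cyc_turns p (cw s) s)) = -4))"
proof (intro conjI impI)
  obtain k where k: "\<forall>s. fval p s = k + (if (4 + idx s - idx (hd p)) mod 4 < (4 + idx (last p) - idx (hd p)) mod 4 then 1 else 0)"
    using part12_aux[OF assms] by blast
  show "\<exists>k::int. \<forall>s.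
            (int (turns p s (cw s)) - int (turns p (cw s) s) - k \<in> {0, 1}) \<and>
            (int (turns p s (cw s)) - int (turns p (cw s) s) - k = 1 \<longleftrightarrow>
               (\<exists>j < cw_dist (hd p) (last p). s = (cw ^^ j) (hd p)))"
  proof (intro exI[of _ k] allI conjI)
    fix s
    have e: "int (turns p s (cw s)) - int (turns p (cw s) s) - k = (if (4 + idx s - idx (hd p)) mod 4 < (4 + idx (last p) - idx (hd p)) mod 4 then 1 else 0)"
      using k[rule_format, of s] unfolding fval_def by simp
    show "int (turns p s (cw s)) - int (turns p (cw s) s) - k \<in> {0, 1}" unfolding e by simp
    show "int (turns p s (cw s)) - int (turns p (cw s) s) - k = 1 \<longleftrightarrow> (\<exists>j < cw_dist (hd p) (last p). s = (cw ^^ j) (hd p))"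
      unfolding e arc_eq by simp
  qed
next
  assume cs: "closed p \<and> self_avoiding p" and h: "clockwise p"
  then show "(\<Sum>s\<in>{U, R, D, L}. int (cyc_turns p s (cw s)) - int (cyc_turns p (cw s) s)) = 4"
    using part3[OF assms cs] unfolding clockwise_def by (auto simp: mult_less_0_iff)
next
  assume cs: "closed p \<and> self_avoiding p" and h: "counterclockwise p"
  then show "(\<Sum>s\<in>{U, R, D, L}. int (cyc_turns p s (cw s)) - int (cyc_turns p (cw s) s)) = -4"
    using part3[OF assms cs] unfolding counterclockwise_def by (auto simp: mult_less_0_iff)
qed


end
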